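(* Let $A=\langle Q,\delta,\gamma,F\rangle$ be a finitely supported pomset automaton. Let $q_0,q_2,q_4\in Q$ and $q_1,q_3,q_5\in F$, and let $U,V,W,X\in\mathsf{Pom}^{\mathsf{sp}}$ be such that $q_0\xrightarrow{U}_A q_1$, $q_0\xrightarrow{V}_A q_0$, $q_2\xrightarrow{X}_A q_3$, $q_4\xrightarrow{W}_A q_5$ and $\gamma(q_0,q_2,q_0)=q_4$. If $X\neq 1$, and moreover $W\neq1$ or $V\neq1$, then $L_A(q_0)$ has unbounded depth, i.e., for every $n\in\mathbb N$ there is $Y\in L_A(q_0)$ with $|Y|>n$.
   Context: Fix a finite alphabet $\Sigma$; pomsets are isomorphism classes of $\Sigma$-labelled posets, $1$ the empty pomset, $a\in\Sigma$ the one-point pomset, $U\cdot V$ the disjoint union with all of $U$ below all of $V$, $U\parallel V$ the disjoint union without added order, and $\mathsf{Pom}^{\mathsf{sp}}$ the smallest set containing $1$ and all $a$ closed under both. Every non-empty series-parallel pomset is exactly one of: a primitive $a$, a sequential composition of two non-empty smaller sp-pomsets, or a parallel composition of two non-empty smaller sp-pomsets. The depth $|U|$ is defined by $|1|=0$, $|a|=1$, and if $U=U_0\cdots U_{n-1}$ or $U=U_0\parallel\dots\parallel U_{n-1}$ with non-empty $U_i$ and $n>1$ maximal for such a decomposition, then $|U|=\max_i|U_i|+1$. A PA is $A=\langle Q,\delta,\gamma,F\rangle$ with $F\subseteq Q$, $\delta:Q\times\Sigma\to Q$, $\gamma:Q^3\to Q$, with states $\bot\notin F$, $\top\in F$ such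 that $\delta(\bot,a)=\delta(\top,a)=\bot$, $\gamma(\bot,r,s)=\gamma(\top,r,s)=\bot$. Traces: the smallest relation with $q\xrightarrow{1}_A q$; $q\xrightarrow{a}_A\delta(q,a)$; $q\xrightarrow{U}_A q''\xrightarrow{V}_A q'$ implies $q\xrightarrow{U\cdot V}_A q'$; $r\xrightarrow{U}_A r'\in F$, $s\xrightarrow{V}_A s'\in F$ imply $q\xrightarrow{U\parallel V}_A\gamma(q,r,s)$. $L_A(q)=\{U:\exists q'\in F.\ q\xrightarrow{U}_A q'\}$. $\preceq_A$ is the smallest preorder with $r,s\preceq_A q$ when $\gamma(q,r,s)\neq\bot$, $\delta(q,a)\preceq_A q$, $\gamma(q,r,s)\preceq_A q$; $\pi_A(q)$ is the smallest $\preceq_A$-downward-closed set containing $q$; $A$ is finitely supported if all $\pi_A(q)$ are finite. *)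

theory Defs
  imports Main
begin

record 'a lpo =
  car :: "nat set"
  rel :: "(nat \<times> nat) set"
  lab :: "nat \<Rightarrow> 'a"

definition lpo_wf :: "'a lpo \<Rightarrow> bool" where
  "lpo_wf P \<longleftrightarrow> finite (car P) \<and> rel P \<subseteq> car P \<times> car P \<and>
     refl_on (car P) (rel P) \<and> antisym (rel P) \<and> trans (rel P)"

definition lpo_iso :: "'a lpo \<Rightarrow> 'a lpo \<Rightarrow> bool" where
  "lpo_iso P Q \<longleftrightarrow> (\<exists>f. bij_betw f (car P) (car Q) \<and>
     (\<forall>x\<in>car P. lab Q (f x) = lab P x) \<and>
     (\<forall>x\<in>car P. \<forall>y\<in>car P. (x, y) \<in> rel P \<longleftrightarrow> (f x, f y) \<in> rel Q))"

typedef 'a pomset = "{C :: 'a lpo set. \<exists>P. lpo_wf P \<and> C = {Q. lpo_wf Q \<and> lpo_iso P Q}}"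
  by (rule exI[where x="{Q. lpo_wf Q \<and> lpo_iso \<lparr>car = {}, rel = {}, lab = (\<lambda>_. undefined)\<rparr> Q}"],
      rule CollectI, rule exI[where x="\<lparr>car = {}, rel = {}, lab = (\<lambda>_. undefined)\<rparr>"],
      simp add: lpo_wf_def refl_on_def antisym_def trans_def)

definition pom_of :: "'a lpo \<Rightarrow> 'a pomset" where
  "pom_of P = Abs_pomset {Q. lpo_wf Q \<and> lpo_iso P Q}"

definition rep :: "'a pomset \<Rightarrow> 'a lpo" where
  "rep U = (SOME P. P \<in> Rep_pomset U)"

definition seq_lpo :: "'a lpo \<Rightarrow> 'a lpo \<Rightarrow> 'a lpo" where
  "seq_lpo P Q = \<lparr>car = (\<lambda>x. 2 * x) ` car P \<union> (\<lambda>y. 2 * y + 1) ` car Q,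
     rel = {(2 * x, 2 * y) | x y. (x, y) \<in> rel P} \<union> {(2 * x + 1, 2 * y + 1) | x y. (x, y) \<in> rel Q}
           \<union> {(2 * x, 2 * y + 1) | x y. x \<in> car P \<and> y \<in> car Q},
     lab = (\<lambda>n. if even n then lab P (n div 2) else lab Q (n div 2))\<rparr>"

definition par_lpo :: "'a lpo \<Rightarrow> 'a lpo \<Rightarrow> 'a lpo" where
  "par_lpo P Q = \<lparr>car = (\<lambda>x. 2 * x) ` car P \<union> (\<lambda>y. 2 * y + 1) ` car Q,
     rel = {(2 * x, 2 * y) | x y. (x, y) \<in> rel P} \<union> {(2 * x + 1, 2 * y + 1) | x y. (x, y) \<in> rel Q},
     lab = (\<lambda>n. if even n then lab P (n div 2) else lab Q (n div 2))\<rparr>"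

definition pom_one :: "'a pomset" where
  "pom_one = pom_of \<lparr>car = {}, rel = {}, lab = (\<lambda>_. undefined)\<rparr>"

definition pom_prim :: "'a \<Rightarrow> 'a pomset" where
  "pom_prim a = pom_of \<lparr>car = {0}, rel = {(0, 0)}, lab = (\<lambda>_. a)\<rparr>"

definition pom_seq :: "'a pomset \<Rightarrow> 'a pomset \<Rightarrow> 'a pomset" where
  "pom_seq U V = pom_of (seq_lpo (rep U) (rep V))"

definition pom_par :: "'a pomset \<Rightarrow> 'a pomset \<Rightarrow> 'a pomset" where
  "pom_par U V = pom_of (par_lpo (rep U) (rep V))"

inductive_set sp_pomsets :: "'a pomset set" where
  sp_one: "pom_one \<in> sp_pomsets"
| sp_prim: "pom_prim a \<in> sp_pomsets"
| sp_seq: "U \<in> sp_pomsets \<Longrightarrow> V \<in> sp_pomsets \<Longrightarrow> pom_seq U V \<in> sp_pomsets"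
| sp_par: "U \<in> sp_pomsets \<Longrightarrow> V \<in> sp_pomsets \<Longrightarrow> pom_par U V \<in> sp_pomsets"

definition seq_list :: "'a pomset list \<Rightarrow> 'a pomset" where
  "seq_list Us = foldr pom_seq Us pom_one"

definition par_list :: "'a pomset list \<Rightarrow> 'a pomset" where
  "par_list Us = foldr pom_par Us pom_one"

inductive has_depth :: "'a pomset \<Rightarrow> nat \<Rightarrow> bool" where
  depth_one: "has_depth pom_one 0"
| depth_prim: "has_depth (pom_prim a) 1"
| depth_seq: "\<lbrakk> length Us > 1; \<forall>Ui\<in>set Us. Ui \<noteq> pom_one; U = seq_list Us;
     \<not> (\<exists>Vs. length Vs > length Us \<and> (\<forall>Vi\<in>set Vs. Vi \<noteq> pom_one) \<and> U = seq_list Vs);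
     length ds = length Us; \<forall>i<length Us. has_depth (Us ! i) (ds ! i) \<rbrakk>
     \<Longrightarrow> has_depth U (Max (set ds) + 1)"
| depth_par: "\<lbrakk> length Us > 1; \<forall>Ui\<in>set Us. Ui \<noteq> pom_one; U = par_list Us;
     \<not> (\<exists>Vs. length Vs > length Us \<and> (\<forall>Vi\<in>set Vs. Vi \<noteq> pom_one) \<and> U = par_list Vs);
     length ds = length Us; \<forall>i<length Us. has_depth (Us ! i) (ds ! i) \<rbrakk>
     \<Longrightarrow> has_depth U (Max (set ds) + 1)"

definition depth :: "'a pomset \<Rightarrow> nat" where
  "depth U = (THE d. has_depth U d)"

definition is_PA :: "('q \<Rightarrow> 'a \<Rightarrow> 'q) \<Rightarrow> ('q \<Rightarrow> 'q \<Rightarrow> 'q \<Rightarrow> 'q) \<Rightarrow> 'q set \<Rightarrow> 'q \<Rightarrow> 'q \<Rightarrow> bool" where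
  "is_PA delta gamma F qbot qtop \<longleftrightarrow> qbot \<notin> F \<and> qtop \<in> F \<and>
     (\<forall>a. delta qbot a = qbot \<and> delta qtop a = qbot) \<and>
     (\<forall>r s. gamma qbot r s = qbot \<and> gamma qtop r s = qbot)"

inductive trace :: "('q \<Rightarrow> 'a \<Rightarrow> 'q) \<Rightarrow> ('q \<Rightarrow> 'q \<Rightarrow> 'q \<Rightarrow> 'q) \<Rightarrow> 'q set
    \<Rightarrow> 'q \<Rightarrow> 'a pomset \<Rightarrow> 'q \<Rightarrow> bool"
  for delta gamma F where
  tr_one: "trace delta gamma F q pom_one q"
| tr_prim: "trace delta gamma F q (pom_prim a) (delta q a)"
| tr_seq: "trace delta gamma F q U q'' \<Longrightarrow> trace delta gamma F q'' V q'
     \<Longrightarrow> trace delta gamma F q (pom_seq U V) q'"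
| tr_par: "trace delta gamma F r U r' \<Longrightarrow> r' \<in> F \<Longrightarrow> trace delta gamma F s V s' \<Longrightarrow> s' \<in> F
     \<Longrightarrow> trace delta gamma F q (pom_par U V) (gamma q r s)"

definition lang :: "('q \<Rightarrow> 'a \<Rightarrow> 'q) \<Rightarrow> ('q \<Rightarrow> 'q \<Rightarrow> 'q \<Rightarrow> 'q) \<Rightarrow> 'q set \<Rightarrow> 'q \<Rightarrow> 'a pomset set" where
  "lang delta gamma F q = {U. \<exists>q'\<in>F. trace delta gamma F q U q'}"

inductive below :: "('q \<Rightarrow> 'a \<Rightarrow> 'q) \<Rightarrow> ('q \<Rightarrow> 'q \<Rightarrow> 'q \<Rightarrow> 'q) \<Rightarrow> 'q \<Rightarrow> 'q \<Rightarrow> 'q \<Rightarrow> bool"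
  for delta gamma qbot where
  below_refl: "below delta gamma qbot q q"
| below_trans: "below delta gamma qbot p q \<Longrightarrow> below delta gamma qbot q r \<Longrightarrow> below delta gamma qbot p r"
| below_fork_l: "gamma q r s \<noteq> qbot \<Longrightarrow> below delta gamma qbot r q"
| below_fork_r: "gamma q r s \<noteq> qbot \<Longrightarrow> below delta gamma qbot s q"
| below_delta: "below delta gamma qbot (delta q a) q"
| below_gamma: "below delta gamma qbot (gamma q r s) q"

definition support :: "('q \<Rightarrow> 'a \<Rightarrow> 'q) \<Rightarrow> ('q \<Rightarrow> 'q \<Rightarrow> 'q \<Rightarrow> 'q) \<Rightarrow> 'q \<Rightarrow> 'q \<Rightarrow> 'q set" where
  "support delta gamma qbot q =
     \<Inter> {S. q \<in> S \<and> (\<forall>p p'. p \<in> S \<longrightarrow> below delta gamma qbot p' p \<longrightarrow> p' \<in> S)}"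

definition finitely_supported :: "('q \<Rightarrow> 'a \<Rightarrow> 'q) \<Rightarrow> ('q \<Rightarrow> 'q \<Rightarrow> 'q \<Rightarrow> 'q) \<Rightarrow> 'q \<Rightarrow> bool" where
  "finitely_supported delta gamma qbot \<longleftrightarrow> (\<forall>q. finite (support delta gamma qbot q))"

end

theory Submission
  imports Defs
begin


subsection \<open>Isomorphism basics\<close>

lemma lpo_iso_refl: "lpo_iso P P"
  unfolding lpo_iso_def by (rule exI[of _ id]) auto

lemma lpo_iso_sym:
  assumes "lpo_iso P Q" shows "lpo_iso Q P"
proof -
  obtain f where f: "bij_betw f (car P) (car Q)" "\<forall>x\<in>car P. lab Q (f x) = lab P x"
    "\<forall>x\<in>car P. \<forall>y\<in>car P. (x, y) \<in> rel P \<longleftrightarrow> (f x, f y) \<in> rel Q"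
    using assms unfolding lpo_iso_def by blast
  let ?g = "inv_into (car P) f"
  have g: "bij_betw ?g (car Q) (car P)" using f(1) by (rule bij_betw_inv_into)
  have fg: "\<And>y. y \<in> car Q \<Longrightarrow> f (?g y) = y" using f(1)
    by (meson bij_betw_inv_into_right)
  have gin: "\<And>y. y \<in> car Q \<Longrightarrow> ?g y \<in> car P" using g bij_betwE by blast
  show ?thesis unfolding lpo_iso_def
    apply (rule exI[of _ ?g])
    using g f(2,3) fg gin by metis
qed

lemma lpo_iso_trans:
  assumes "lpo_iso P Q" "lpo_iso Q R" shows "lpo_iso P R"
proof -
  obtain f where f: "bij_betw f (car P) (car Q)" "\<forall>x\<in>car P. lab Q (f x) = lab P x"
    "\<forall>x\<in>car P. \<forall>y\<in>car P. (x, y) \<in> rel P \<longleftrightarrow> (f x, f y) \<in> rel Q"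
    using assms(1) unfolding lpo_iso_def by blast
  obtain g where g: "bij_betw g (car Q) (car R)" "\<forall>x\<in>car Q. lab R (g x) = lab Q x"
    "\<forall>x\<in>car Q. \<forall>y\<in>car Q. (x, y) \<in> rel Q \<longleftrightarrow> (g x, g y) \<in> rel R"
    using assms(2) unfolding lpo_iso_def by blast
  have fin: "\<And>x. x \<in> car P \<Longrightarrow> f x \<in> car Q" using f(1) bij_betwE by blast
  show ?thesis unfolding lpo_iso_def
    apply (rule exI[of _ "g \<circ> f"])
    using bij_betw_trans[OF f(1) g(1)] f(2,3) g(2,3) fin by auto
qed

lemma Rep_pom_of:
  assumes "lpo_wf P" shows "Rep_pomset (pom_of P) = {Q. lpo_wf Q \<and> lpo_iso P Q}"
  unfolding pom_of_def using assms by (intro Abs_pomset_inverse) blast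

lemma pom_of_eq_iff:
  assumes "lpo_wf P" "lpo_wf Q"
  shows "pom_of P = pom_of Q \<longleftrightarrow> lpo_iso P Q"
proof
  assume "pom_of P = pom_of Q"
  then have "{R. lpo_wf R \<and> lpo_iso P R} = {R. lpo_wf R \<and> lpo_iso Q R}"
    using Rep_pom_of[OF assms(1)] Rep_pom_of[OF assms(2)] by simp
  then have "Q \<in> {R. lpo_wf R \<and> lpo_iso P R}" using assms(2) lpo_iso_refl by blast
  then show "lpo_iso P Q" by simp
next
  assume i: "lpo_iso P Q"
  have "{R. lpo_wf R \<and> lpo_iso P R} = {R. lpo_wf R \<and> lpo_iso Q R}"
    using i lpo_iso_sym lpo_iso_trans by blast
  then show "pom_of P = pom_of Q" unfolding pom_of_def by simp
qed

lemma rep_props: "lpo_wf (rep U) \<and> pom_of (rep U) = U"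
proof -
  obtain P where P: "lpo_wf P" "Rep_pomset U = {Q. lpo_wf Q \<and> lpo_iso P Q}"
    using Rep_pomset[of U] by blast
  have "P \<in> Rep_pomset U" using P lpo_iso_refl by blast
  then have r: "rep U \<in> Rep_pomset U" unfolding rep_def by (rule someI)
  then have w: "lpo_wf (rep U)" "lpo_iso P (rep U)" using P by auto
  have "pom_of (rep U) = pom_of P" using pom_of_eq_iff[OF w(1) P(1)] w(2) lpo_iso_sym by blast
  also have "pom_of P = U" unfolding pom_of_def using P(2)[symmetric] Rep_pomset_inverse by simp
  finally show ?thesis using w by simp
qed

lemma rep_wf[simp]: "lpo_wf (rep U)" using rep_props by blast
lemma pom_of_rep[simp]: "pom_of (rep U) = U" using rep_props by blast

definition restr :: "'a lpo \<Rightarrow> nat set \<Rightarrow> 'a lpo" where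
  "restr P S = \<lparr>car = S, rel = rel P \<inter> S \<times> S, lab = lab P\<rparr>"

lemma restr_simps[simp]: "car (restr P S) = S" "rel (restr P S) = rel P \<inter> S \<times> S"
  "lab (restr P S) = lab P"
  unfolding restr_def by simp_all

lemma restr_wf: assumes "lpo_wf P" "S \<subseteq> car P" shows "lpo_wf (restr P S)"
  using assms unfolding lpo_wf_def refl_on_def antisym_def trans_def
  by (auto intro: finite_subset)

lemma restr_restr[simp]: "T \<subseteq> S \<Longrightarrow> restr (restr P S) T = restr P T"
  unfolding restr_def by auto

lemma restr_car[simp]: "lpo_wf P \<Longrightarrow> restr P (car P) = P"
  unfolding restr_def lpo_wf_def by (cases P) (auto simp: Int_absorb2)



definition cmb :: "bool \<Rightarrow> 'a lpo \<Rightarrow> 'a lpo \<Rightarrow> 'a lpo" where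
  "cmb b P Q = (if b then seq_lpo P Q else par_lpo P Q)"

definition pcmb :: "bool \<Rightarrow> 'a pomset \<Rightarrow> 'a pomset \<Rightarrow> 'a pomset" where
  "pcmb b = (if b then pom_seq else pom_par)"

definition cross :: "bool \<Rightarrow> 'a lpo \<Rightarrow> nat set \<Rightarrow> nat set \<Rightarrow> bool" where
  "cross b P S T = (if b then S \<times> T \<subseteq> rel P else (\<forall>x\<in>S. \<forall>y\<in>T. (x,y) \<notin> rel P \<and> (y,x) \<notin> rel P))"

lemma two_neq_simps[simp]: "2 * x \<noteq> Suc (2 * y)" "Suc (2 * x) \<noteq> 2 * (y::nat)"
  "2 * x \<noteq> 2 * y + 1" "2 * x + 1 \<noteq> 2 * (y::nat)"
  by presburger+

lemma pcmb_eq: "pcmb b A B = pom_of (cmb b (rep A) (rep B))"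
  unfolding pcmb_def cmb_def pom_seq_def pom_par_def by simp

lemma car_cmb: "m \<in> car (cmb b P Q) \<longleftrightarrow> (even m \<and> m div 2 \<in> car P) \<or> (odd m \<and> m div 2 \<in> car Q)"
  unfolding cmb_def seq_lpo_def par_lpo_def by (auto elim!: evenE oddE)

lemma rel_cmb: "(m, n) \<in> rel (cmb b P Q) \<longleftrightarrow>
   (even m \<and> even n \<and> (m div 2, n div 2) \<in> rel P) \<or> (odd m \<and> odd n \<and> (m div 2, n div 2) \<in> rel Q)
   \<or> (b \<and> even m \<and> odd n \<and> m div 2 \<in> car P \<and> n div 2 \<in> car Q)"
  unfolding cmb_def seq_lpo_def par_lpo_def by (auto elim!: evenE oddE)

lemma lab_cmb: "lab (cmb b P Q) m = (if even m then lab P (m div 2) else lab Q (m div 2))"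
  unfolding cmb_def seq_lpo_def par_lpo_def by auto

lemma cmb_wf:
  assumes "lpo_wf P" "lpo_wf Q" shows "lpo_wf (cmb b P Q)"
proof -
  have fin: "finite (car (cmb b P Q))"
  proof -
    have "car (cmb b P Q) = (\<lambda>x. 2 * x) ` car P \<union> (\<lambda>y. 2 * y + 1) ` car Q"
      unfolding cmb_def seq_lpo_def par_lpo_def by auto
    then show ?thesis using assms unfolding lpo_wf_def by simp
  qed
  have sub: "rel (cmb b P Q) \<subseteq> car (cmb b P Q) \<times> car (cmb b P Q)"
    using assms unfolding lpo_wf_def by (auto simp: rel_cmb car_cmb)
  have refl: "refl_on (car (cmb b P Q)) (rel (cmb b P Q))"
    using assms sub unfolding lpo_wf_def refl_on_def by (auto simp: rel_cmb car_cmb)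
  have anti: "antisym (rel (cmb b P Q))"
  proof (rule antisymI)
    fix m n assume "(m, n) \<in> rel (cmb b P Q)" "(n, m) \<in> rel (cmb b P Q)"
    then have "m div 2 = n div 2 \<and> (even m = even n)"
      using assms unfolding lpo_wf_def by (auto simp: rel_cmb dest: antisymD)
    then show "m = n" by (metis dvd_mult_div_cancel odd_two_times_div_two_succ)
  qed
  have tr: "trans (rel (cmb b P Q))"
  proof (rule transI)
    fix m n k assume "(m, n) \<in> rel (cmb b P Q)" "(n, k) \<in> rel (cmb b P Q)"
    then show "(m, k) \<in> rel (cmb b P Q)"
      using assms unfolding lpo_wf_def by (auto simp: rel_cmb dest: transD)
  qed
  show ?thesis unfolding lpo_wf_def using fin sub refl anti tr by blast
qed



lemma iso_get:
  assumes "lpo_iso P Q"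
  obtains f where "bij_betw f (car P) (car Q)" "\<And>x. x\<in>car P \<Longrightarrow> lab Q (f x) = lab P x"
    "\<And>x y. x\<in>car P \<Longrightarrow> y\<in>car P \<Longrightarrow> (x, y) \<in> rel P \<longleftrightarrow> (f x, f y) \<in> rel Q"
proof -
  from assms obtain f where "bij_betw f (car P) (car Q)" "\<forall>x\<in>car P. lab Q (f x) = lab P x"
    "\<forall>x\<in>car P. \<forall>y\<in>car P. (x, y) \<in> rel P \<longleftrightarrow> (f x, f y) \<in> rel Q"
    unfolding lpo_iso_def by blast
  then show thesis using that by blast
qed

lemma split2_dest:
  assumes wf: "lpo_wf P" and eq: "pom_of P = pcmb b A B"
  shows "\<exists>S T. S \<union> T = car P \<and> S \<inter> T = {} \<and> cross b P S T \<and> A = pom_of (restr P S) \<and> B = pom_of (restr P T)"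
proof -
  let ?C = "cmb b (rep A) (rep B)"
  have wC: "lpo_wf ?C" by (rule cmb_wf) simp_all
  have "lpo_iso P ?C" using eq pcmb_eq pom_of_eq_iff[OF wf wC] by metis
  then obtain f where fb: "bij_betw f (car P) (car ?C)" and fl: "\<And>x. x\<in>car P \<Longrightarrow> lab ?C (f x) = lab P x"
    and fr: "\<And>x y. x\<in>car P \<Longrightarrow> y\<in>car P \<Longrightarrow> (x, y) \<in> rel P \<longleftrightarrow> (f x, f y) \<in> rel ?C"
    by (erule iso_get)
  have finj: "inj_on f (car P)" and fim: "f ` car P = car ?C" using fb unfolding bij_betw_def by auto
  define S where "S = {x\<in>car P. even (f x)}"
  define T where "T = {x\<in>car P. odd (f x)}"
  have ST: "S \<union> T = car P" "S \<inter> T = {}" unfolding S_def T_def by auto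
  have fS: "\<And>x. x \<in> S \<Longrightarrow> even (f x) \<and> f x = 2 * (f x div 2) \<and> f x div 2 \<in> car (rep A)"
    using fim unfolding S_def by (auto simp: car_cmb)
  have fT: "\<And>x. x \<in> T \<Longrightarrow> odd (f x) \<and> f x = 2 * (f x div 2) + 1 \<and> f x div 2 \<in> car (rep B)"
    using fim unfolding T_def by (auto simp: car_cmb)
  have isoS: "lpo_iso (restr P S) (rep A)"
    unfolding lpo_iso_def
  proof (intro exI[of _ "\<lambda>x. f x div 2"] conjI ballI)
    show "bij_betw (\<lambda>x. f x div 2) (car (restr P S)) (car (rep A))"
      unfolding bij_betw_def
    proof
      show "inj_on (\<lambda>x. f x div 2) (car (restr P S))"
      proof (rule inj_onI)
        fix x y assume "x \<in> car (restr P S)" "y \<in> car (restr P S)" "f x div 2 = f y div 2"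
        moreover then have "f x = f y" using fS by (metis restr_simps(1))
        ultimately show "x = y" using inj_onD[OF finj] ST by auto
      qed
      show "(\<lambda>x. f x div 2) ` car (restr P S) = car (rep A)"
      proof
        show "(\<lambda>x. f x div 2) ` car (restr P S) \<subseteq> car (rep A)" using fS by auto
        show "car (rep A) \<subseteq> (\<lambda>x. f x div 2) ` car (restr P S)"
        proof
          fix a assume a: "a \<in> car (rep A)"
          then have "2 * a \<in> car ?C" by (simp add: car_cmb)
          then obtain x where "x \<in> car P" "f x = 2 * a" using fim by (metis imageE)
          then show "a \<in> (\<lambda>x. f x div 2) ` car (restr P S)" unfolding S_def by force
        qed
      qed
    qed
    fix x assume x: "x \<in> car (restr P S)"
    then show "lab (rep A) (f x div 2) = lab (restr P S) x"
      using fl[of x] fS[of x] ST by (auto simp: lab_cmb)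
    fix y assume y: "y \<in> car (restr P S)"
    show "(x, y) \<in> rel (restr P S) \<longleftrightarrow> (f x div 2, f y div 2) \<in> rel (rep A)"
      using fr[of x y] x y fS[of x] fS[of y] ST by (auto simp: rel_cmb)
  qed
  have isoT: "lpo_iso (restr P T) (rep B)"
    unfolding lpo_iso_def
  proof (intro exI[of _ "\<lambda>x. f x div 2"] conjI ballI)
    show "bij_betw (\<lambda>x. f x div 2) (car (restr P T)) (car (rep B))"
      unfolding bij_betw_def
    proof
      show "inj_on (\<lambda>x. f x div 2) (car (restr P T))"
      proof (rule inj_onI)
        fix x y assume "x \<in> car (restr P T)" "y \<in> car (restr P T)" "f x div 2 = f y div 2"
        moreover then have "f x = f y" using fT by (metis restr_simps(1))
        ultimately show "x = y" using inj_onD[OF finj] ST by auto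
      qed
      show "(\<lambda>x. f x div 2) ` car (restr P T) = car (rep B)"
      proof
        show "(\<lambda>x. f x div 2) ` car (restr P T) \<subseteq> car (rep B)" using fT by auto
        show "car (rep B) \<subseteq> (\<lambda>x. f x div 2) ` car (restr P T)"
        proof
          fix a assume a: "a \<in> car (rep B)"
          then have "2 * a + 1 \<in> car ?C" by (simp add: car_cmb)
          then obtain x where "x \<in> car P" "f x = 2 * a + 1" using fim by (metis imageE)
          then show "a \<in> (\<lambda>x. f x div 2) ` car (restr P T)" unfolding T_def by force
        qed
      qed
    qed
    fix x assume x: "x \<in> car (restr P T)"
    then show "lab (rep B) (f x div 2) = lab (restr P T) x"
      using fl[of x] fT[of x] ST by (auto simp: lab_cmb)
    fix y assume y: "y \<in> car (restr P T)"
    show "(x, y) \<in> rel (restr P T) \<longleftrightarrow> (f x div 2, f y div 2) \<in> rel (rep B)"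
      using fr[of x y] x y fT[of x] fT[of y] ST by (auto simp: rel_cmb)
  qed
  have cr: "cross b P S T"
  proof (cases b)
    case True
    have "(x, y) \<in> rel P" if "x \<in> S" "y \<in> T" for x y
    proof -
      have "(f x, f y) \<in> rel ?C" using True fS[OF that(1)] fT[OF that(2)] by (simp add: rel_cmb)
      then show ?thesis using fr[of x y] that ST by blast
    qed
    then show ?thesis unfolding cross_def using True by auto
  next
    case False
    have "(x, y) \<notin> rel P \<and> (y, x) \<notin> rel P" if "x \<in> S" "y \<in> T" for x y
    proof -
      have "(f x, f y) \<notin> rel ?C" "(f y, f x) \<notin> rel ?C"
        using False fS[OF that(1)] fT[OF that(2)] by (simp_all add: rel_cmb)
      then show ?thesis using fr[of x y] fr[of y x] that ST by blast
    qed
    then show ?thesis unfolding cross_def using False by auto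
  qed
  have "A = pom_of (restr P S)"
    using isoS pom_of_eq_iff[of "restr P S" "rep A"] restr_wf[OF wf] ST by auto
  moreover have "B = pom_of (restr P T)"
    using isoT pom_of_eq_iff[of "restr P T" "rep B"] restr_wf[OF wf] ST by auto
  ultimately show ?thesis using ST cr by blast
qed

lemma split2_intro:
  assumes wf: "lpo_wf P" and ST: "S \<union> T = car P" "S \<inter> T = {}" and cr: "cross b P S T"
  shows "pom_of P = pcmb b (pom_of (restr P S)) (pom_of (restr P T))"
proof -
  let ?A = "pom_of (restr P S)" and ?B = "pom_of (restr P T)"
  let ?C = "cmb b (rep ?A) (rep ?B)"
  have wC: "lpo_wf ?C" by (rule cmb_wf) simp_all
  have wS: "lpo_wf (restr P S)" and wT: "lpo_wf (restr P T)" using restr_wf[OF wf] ST by auto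
  have "lpo_iso (restr P S) (rep ?A)" using pom_of_eq_iff[OF wS rep_wf[of "?A"]] pom_of_rep[of "?A"] by metis
  then obtain g where gb: "bij_betw g S (car (rep ?A))" and gl: "\<And>x. x\<in>S \<Longrightarrow> lab (rep ?A) (g x) = lab P x"
    and gr: "\<And>x y. x\<in>S \<Longrightarrow> y\<in>S \<Longrightarrow> (x, y) \<in> rel P \<longleftrightarrow> (g x, g y) \<in> rel (rep ?A)"
    unfolding lpo_iso_def by auto
  have "lpo_iso (restr P T) (rep ?B)" using pom_of_eq_iff[OF wT rep_wf[of "?B"]] pom_of_rep[of "?B"] by metis
  then obtain h where hb: "bij_betw h T (car (rep ?B))" and hl: "\<And>x. x\<in>T \<Longrightarrow> lab (rep ?B) (h x) = lab P x"
    and hr: "\<And>x y. x\<in>T \<Longrightarrow> y\<in>T \<Longrightarrow> (x, y) \<in> rel P \<longleftrightarrow> (h x, h y) \<in> rel (rep ?B)"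
    unfolding lpo_iso_def by auto
  have ginj: "inj_on g S" and gim: "g ` S = car (rep ?A)" using gb unfolding bij_betw_def by auto
  have hinj: "inj_on h T" and him: "h ` T = car (rep ?B)" using hb unfolding bij_betw_def by auto
  define f where "f x = (if x \<in> S then 2 * g x else 2 * h x + 1)" for x
  have fS: "\<And>x. x \<in> S \<Longrightarrow> f x = 2 * g x" and fT: "\<And>x. x \<in> T \<Longrightarrow> f x = 2 * h x + 1"
    unfolding f_def using ST by auto
  have iso: "lpo_iso P ?C"
    unfolding lpo_iso_def
  proof (intro exI[of _ f] conjI ballI)
    show "bij_betw f (car P) (car ?C)"
      unfolding bij_betw_def
    proof
      show "inj_on f (car P)"
      proof (rule inj_onI)
        fix x y assume xy: "x \<in> car P" "y \<in> car P" "f x = f y"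
        show "x = y"
        proof (cases "x \<in> S"; cases "y \<in> S")
          assume "x \<in> S" "y \<in> S" then show ?thesis using xy fS inj_onD[OF ginj] by simp
        next
          assume "x \<in> S" "y \<notin> S" then show ?thesis using xy fS fT ST by auto
        next
          assume "x \<notin> S" "y \<in> S" then show ?thesis using xy fS fT ST by auto
        next
          assume "x \<notin> S" "y \<notin> S"
          then have "x \<in> T" "y \<in> T" using xy ST by auto
          then show ?thesis using xy fT inj_onD[OF hinj] by simp
        qed
      qed
      show "f ` car P = car ?C"
      proof
        show "f ` car P \<subseteq> car ?C"
        proof
          fix m assume "m \<in> f ` car P"
          then obtain x where x: "x \<in> car P" "m = f x" by blast
          show "m \<in> car ?C"
          proof (cases "x \<in> S")
            case True then show ?thesis using x fS gim by (auto simp: car_cmb)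
          next
            case False then have "x \<in> T" using x ST by auto
            then show ?thesis using x fT him by (auto simp: car_cmb)
          qed
        qed
        show "car ?C \<subseteq> f ` car P"
        proof
          fix m assume m: "m \<in> car ?C"
          show "m \<in> f ` car P"
          proof (cases "even m")
            case True
            then have "m div 2 \<in> g ` S" using m gim by (auto simp: car_cmb)
            then obtain x where "x \<in> S" "g x = m div 2" by (metis imageE)
            then show ?thesis using fS True ST by (metis UnCI dvd_mult_div_cancel image_eqI)
          next
            case False
            then have "m div 2 \<in> h ` T" using m him by (auto simp: car_cmb)
            then obtain x where "x \<in> T" "h x = m div 2" by (metis imageE)
            then show ?thesis using fT False ST by (metis UnCI odd_two_times_div_two_succ image_eqI)
          qed
        qed
      qed
    qed
    fix x assume x: "x \<in> car P"
    show "lab ?C (f x) = lab P x"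
    proof (cases "x \<in> S")
      case True then show ?thesis using fS gl by (simp add: lab_cmb)
    next
      case False then have "x \<in> T" using x ST by auto
      then show ?thesis using fT hl by (simp add: lab_cmb)
    qed
    fix y assume y: "y \<in> car P"
    have gin: "\<And>x. x \<in> S \<Longrightarrow> g x \<in> car (rep ?A)" using gim by auto
    have hin: "\<And>x. x \<in> T \<Longrightarrow> h x \<in> car (rep ?B)" using him by auto
    have anti: "antisym (rel P)" using wf unfolding lpo_wf_def by auto
    show "(x, y) \<in> rel P \<longleftrightarrow> (f x, f y) \<in> rel ?C"
    proof (cases "x \<in> S"; cases "y \<in> S")
      assume "x \<in> S" "y \<in> S" then show ?thesis using fS gr by (simp add: rel_cmb)
    next
      assume a: "x \<in> S" "y \<notin> S"
      then have "y \<in> T" using y ST by auto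
      then show ?thesis using a fS fT gin hin cr unfolding cross_def by (cases b) (auto simp: rel_cmb)
    next
      assume a: "x \<notin> S" "y \<in> S"
      then have xT: "x \<in> T" using x ST by auto
      have "(x, y) \<notin> rel P"
      proof
        assume xy: "(x, y) \<in> rel P"
        show False
        proof (cases b)
          case True
          then have "(y, x) \<in> rel P" using cr a xT unfolding cross_def by auto
          then have "x = y" using xy anti by (auto dest: antisymD)
          then show False using a by simp
        next
          case False then show False using cr a xT xy unfolding cross_def by auto
        qed
      qed
      then show ?thesis using a xT fS fT by (auto simp: rel_cmb)
    next
      assume "x \<notin> S" "y \<notin> S"
      then have "x \<in> T" "y \<in> T" using x y ST by auto
      then show ?thesis using fT hr by (simp add: rel_cmb)
    qed
  qed
  then show ?thesis using pom_of_eq_iff[OF wf wC] pcmb_eq by metis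
qed

lemma split2:
  assumes wf: "lpo_wf P"
  shows "pom_of P = pcmb b A B \<longleftrightarrow> (\<exists>S T. S \<union> T = car P \<and> S \<inter> T = {} \<and> cross b P S T
     \<and> A = pom_of (restr P S) \<and> B = pom_of (restr P T))"
  using split2_dest[OF wf] split2_intro[OF wf] by blast



lemma pom_one_iff:
  assumes wf: "lpo_wf P" shows "pom_of P = pom_one \<longleftrightarrow> car P = {}"
proof -
  let ?E = "\<lparr>car = {}, rel = {}, lab = (\<lambda>_. undefined)\<rparr> :: 'a lpo"
  have wE: "lpo_wf ?E" by (simp add: lpo_wf_def refl_on_def antisym_def trans_def)
  have "pom_of P = pom_one \<longleftrightarrow> lpo_iso P ?E" unfolding pom_one_def using pom_of_eq_iff[OF wf wE] .
  also have "\<dots> \<longleftrightarrow> car P = {}"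
  proof
    assume "lpo_iso P ?E" then show "car P = {}" unfolding lpo_iso_def by (auto simp: bij_betw_def)
  next
    assume e: "car P = {}"
    then have "rel P = {}" using wf unfolding lpo_wf_def by auto
    then show "lpo_iso P ?E" unfolding lpo_iso_def using e by (auto simp: bij_betw_def)
  qed
  finally show ?thesis .
qed

lemma pom_prim_card:
  assumes wf: "lpo_wf P" and eq: "pom_of P = pom_prim a" shows "card (car P) = 1"
proof -
  let ?E = "\<lparr>car = {0}, rel = {(0,0)}, lab = (\<lambda>_. a)\<rparr> :: 'a lpo"
  have wE: "lpo_wf ?E" by (simp add: lpo_wf_def refl_on_def antisym_def trans_def)
  have "pom_of P = pom_of ?E" using eq unfolding pom_prim_def by simp
  then have "lpo_iso P ?E" using pom_of_eq_iff[OF wf wE] by blast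
  then have "\<exists>f. bij_betw f (car P) {0::nat}" unfolding lpo_iso_def by auto
  then obtain f where "bij_betw f (car P) {0::nat}" by blast
  then have "card (car P) = card {0::nat}" by (rule bij_betw_same_card)
  then show ?thesis by simp
qed

lemma card1_prim:
  assumes wf: "lpo_wf P" and c: "card (car P) = 1" shows "\<exists>a. pom_of P = pom_prim a"
proof -
  obtain x where x: "car P = {x}" using c card_1_singletonE by blast
  let ?E = "\<lparr>car = {0}, rel = {(0,0)}, lab = (\<lambda>_. lab P x)\<rparr> :: 'a lpo"
  have wE: "lpo_wf ?E" by (simp add: lpo_wf_def refl_on_def antisym_def trans_def)
  have r: "rel P = {(x, x)}"
  proof -
    have "rel P \<subseteq> {(x, x)}" using wf x unfolding lpo_wf_def by auto
    moreover have "(x, x) \<in> rel P" using wf x unfolding lpo_wf_def refl_on_def by auto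
    ultimately show ?thesis by blast
  qed
  have b: "bij_betw (\<lambda>_. 0::nat) {x} {0}" by (simp add: bij_betw_def)
  have "lpo_iso P ?E" unfolding lpo_iso_def
    apply (rule exI[of _ "\<lambda>_. 0"])
    using b by (simp add: x r)
  then have "pom_of P = pom_of ?E" using pom_of_eq_iff[OF wf wE] by blast
  then show ?thesis unfolding pom_prim_def by blast
qed

definition lst :: "bool \<Rightarrow> 'a pomset list \<Rightarrow> 'a pomset" where
  "lst b Us = foldr (pcmb b) Us pom_one"

lemma seq_list_lst: "seq_list = lst True" and par_list_lst: "par_list = lst False"
  unfolding seq_list_def par_list_def lst_def pcmb_def by (auto intro!: ext)

lemma lst_simps[simp]: "lst b [] = pom_one" "lst b (U # Us) = pcmb b U (lst b Us)"
  unfolding lst_def by simp_all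

lemma cross_mono: "cross b P A B \<Longrightarrow> A' \<subseteq> A \<Longrightarrow> B' \<subseteq> B \<Longrightarrow> cross b P A' B'"
  unfolding cross_def by (cases b) auto

lemma cross_restr: "A \<subseteq> T \<Longrightarrow> B \<subseteq> T \<Longrightarrow> cross b (restr P T) A B \<longleftrightarrow> cross b P A B"
  unfolding cross_def by (cases b) auto

lemma cross_Union: "(\<forall>B\<in>set Bs. cross b P A B) \<Longrightarrow> cross b P A (\<Union>(set Bs))"
  unfolding cross_def by (cases b) auto

definition valid :: "bool \<Rightarrow> 'a lpo \<Rightarrow> nat set list \<Rightarrow> bool" where
  "valid b P Bs \<longleftrightarrow> \<Union>(set Bs) = car P \<and> sorted_wrt (\<lambda>A B. cross b P A B \<and> A \<inter> B = {}) Bs"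

lemma BC:
  assumes "lpo_wf P"
  shows "pom_of P = lst b Us \<longleftrightarrow> (\<exists>Bs. Us = map (\<lambda>B. pom_of (restr P B)) Bs \<and> valid b P Bs)"
  using assms
proof (induction Us arbitrary: P)
  case Nil
  then show ?case using pom_one_iff[OF Nil.prems] unfolding valid_def by auto
next
  case (Cons U Us)
  note wf = Cons.prems
  show ?case
  proof
    assume "pom_of P = lst b (U # Us)"
    then have "pom_of P = pcmb b U (lst b Us)" by (simp only: lst_simps)
    then have "\<exists>S T. S \<union> T = car P \<and> S \<inter> T = {} \<and> cross b P S T
     \<and> U = pom_of (restr P S) \<and> lst b Us = pom_of (restr P T)" by (rule split2_dest[OF wf])
    then obtain S T where ST: "S \<union> T = car P" "S \<inter> T = {}" "cross b P S T"
      "U = pom_of (restr P S)" "lst b Us = pom_of (restr P T)"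
      by (elim exE conjE) (rule that)
    have wT: "lpo_wf (restr P T)" using restr_wf[OF wf] ST by auto
    obtain Bs where Bs: "Us = map (\<lambda>B. pom_of (restr (restr P T) B)) Bs" "valid b (restr P T) Bs"
    proof -
      have "pom_of (restr P T) = lst b Us" using ST(5) by simp
      then have "\<exists>Bs. Us = map (\<lambda>B. pom_of (restr (restr P T) B)) Bs \<and> valid b (restr P T) Bs"
        by (rule iffD1[OF Cons.IH[OF wT]])
      then show ?thesis using that by (elim exE conjE)
    qed
    have sub: "\<forall>B\<in>set Bs. B \<subseteq> T" using Bs(2) unfolding valid_def by auto
    have m: "Us = map (\<lambda>B. pom_of (restr P B)) Bs" using Bs(1) sub by simp
    have sw: "sorted_wrt (\<lambda>A B. cross b P A B \<and> A \<inter> B = {}) Bs"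
    proof -
      have "sorted_wrt (\<lambda>A B. cross b (restr P T) A B \<and> A \<inter> B = {}) Bs"
        using Bs(2) unfolding valid_def by auto
      then show ?thesis
      proof (rule sorted_wrt_mono_rel[rotated])
        fix x y assume "x \<in> set Bs" "y \<in> set Bs" "cross b (restr P T) x y \<and> x \<inter> y = {}"
        then show "cross b P x y \<and> x \<inter> y = {}" using sub cross_restr[of x T y b P] by auto
      qed
    qed
    have u: "\<Union>(set Bs) = T" using Bs(2) unfolding valid_def by simp
    have "\<forall>B\<in>set Bs. cross b P S B \<and> S \<inter> B = {}"
    proof
      fix B assume "B \<in> set Bs"
      then have "B \<subseteq> T" using sub by blast
      then show "cross b P S B \<and> S \<inter> B = {}" using cross_mono[OF ST(3), of S B] ST(2) by blast
    qed
    then have "valid b P (S # Bs)"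
      unfolding valid_def using sw ST(1) u by simp
    then show "\<exists>Bs. U # Us = map (\<lambda>B. pom_of (restr P B)) Bs \<and> valid b P Bs"
      using m ST(4) by (intro exI[of _ "S # Bs"]) auto
  next
    assume "\<exists>Bs. U # Us = map (\<lambda>B. pom_of (restr P B)) Bs \<and> valid b P Bs"
    then obtain Bs where Bs: "U # Us = map (\<lambda>B. pom_of (restr P B)) Bs" "valid b P Bs"
      by (elim exE conjE) (rule that)
    then obtain S Bs' where SB: "Bs = S # Bs'" by (cases Bs) auto
    define T where "T = \<Union>(set Bs')"
    have v: "S \<union> T = car P" "sorted_wrt (\<lambda>A B. cross b P A B \<and> A \<inter> B = {}) Bs'"
      "\<forall>B\<in>set Bs'. cross b P S B \<and> S \<inter> B = {}"
      using Bs(2) unfolding valid_def SB T_def by auto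
    have ST: "S \<inter> T = {}" "cross b P S T" using v(3) cross_Union unfolding T_def by blast+
    have wT: "lpo_wf (restr P T)" using restr_wf[OF wf] v by auto
    have sub: "\<forall>B\<in>set Bs'. B \<subseteq> T" unfolding T_def by auto
    have "sorted_wrt (\<lambda>A B. cross b (restr P T) A B \<and> A \<inter> B = {}) Bs'"
      using v(2)
    proof (rule sorted_wrt_mono_rel[rotated])
      fix x y assume "x \<in> set Bs'" "y \<in> set Bs'" "cross b P x y \<and> x \<inter> y = {}"
      then show "cross b (restr P T) x y \<and> x \<inter> y = {}" using sub cross_restr[of x T y b P] by auto
    qed
    then have "valid b (restr P T) Bs'"
      unfolding valid_def by (simp add: T_def)
    moreover have "Us = map (\<lambda>B. pom_of (restr (restr P T) B)) Bs'"
      using Bs(1) SB sub by simp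
    ultimately have "pom_of (restr P T) = lst b Us" using Cons.IH[OF wT] by blast
    moreover have "U = pom_of (restr P S)" using Bs(1) SB by simp
    ultimately show "pom_of P = lst b (U # Us)"
      using split2_intro[OF wf v(1) ST(1) ST(2)] by simp
  qed
qed



definition edge :: "bool \<Rightarrow> 'a lpo \<Rightarrow> nat set \<Rightarrow> (nat \<times> nat) set" where
  "edge b P S = {(x, y). x \<in> S \<and> y \<in> S \<and> x \<noteq> y \<and>
     (if b then (x, y) \<notin> rel P \<and> (y, x) \<notin> rel P else ((x, y) \<in> rel P \<or> (y, x) \<in> rel P))}"

definition bcomp :: "bool \<Rightarrow> 'a lpo \<Rightarrow> nat \<Rightarrow> nat set" where
  "bcomp b P x = {y. (x, y) \<in> (edge b P (car P))\<^sup>*}"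

definition bcomps :: "bool \<Rightarrow> 'a lpo \<Rightarrow> nat set set" where
  "bcomps b P = bcomp b P ` car P"

lemma edge_sym: "(x, y) \<in> edge b P S \<Longrightarrow> (y, x) \<in> edge b P S"
  unfolding edge_def by (cases b) auto

lemma rt_sym: "(x, y) \<in> (edge b P S)\<^sup>* \<Longrightarrow> (y, x) \<in> (edge b P S)\<^sup>*"
proof (induction rule: rtrancl_induct)
  case base then show ?case by simp
next
  case (step y z)
  then show ?case using edge_sym converse_rtrancl_into_rtrancl by metis
qed

lemma edge_mono: "S \<subseteq> S' \<Longrightarrow> edge b P S \<subseteq> edge b P S'"
  unfolding edge_def by auto

lemma rt_mono: "S \<subseteq> S' \<Longrightarrow> (x, y) \<in> (edge b P S)\<^sup>* \<Longrightarrow> (x, y) \<in> (edge b P S')\<^sup>*"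
  using rtrancl_mono[OF edge_mono] by blast

lemma rt_in: assumes "x \<in> S" "(x, y) \<in> (edge b P S)\<^sup>*" shows "y \<in> S"
  using assms(2) by (induction rule: rtrancl_induct) (auto simp: edge_def assms(1))

lemma cross_noedge: "cross b P A B \<Longrightarrow> x \<in> A \<Longrightarrow> y \<in> B \<Longrightarrow> (x, y) \<notin> edge b P S"
  unfolding cross_def edge_def by (cases b) auto

lemma valid_pair:
  assumes v: "valid b P Bs" and A: "A \<in> set Bs" and B: "B \<in> set Bs" and ne: "A \<noteq> B"
  shows "(cross b P A B \<and> A \<inter> B = {}) \<or> (cross b P B A \<and> B \<inter> A = {})"
proof -
  obtain i where i: "i < length Bs" "A = Bs ! i" using A by (metis in_set_conv_nth)
  obtain j where j: "j < length Bs" "B = Bs ! j" using B by (metis in_set_conv_nth)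
  have sw: "sorted_wrt (\<lambda>A B. cross b P A B \<and> A \<inter> B = {}) Bs" using v unfolding valid_def by simp
  have "i \<noteq> j" using i j ne by auto
  then have "i < j \<or> j < i" by arith
  then show ?thesis
  proof
    assume "i < j" then show ?thesis using sorted_wrt_nth_less[OF sw _ j(1)] i j by blast
  next
    assume "j < i" then show ?thesis using sorted_wrt_nth_less[OF sw _ i(1)] i j by blast
  qed
qed

lemma stay:
  assumes v: "valid b P Bs" and B: "B \<in> set Bs" and x: "x \<in> B"
    and p: "(x, y) \<in> (edge b P (car P))\<^sup>*"
  shows "y \<in> B"
  using p
proof (induction rule: rtrancl_induct)
  case base then show ?case using x by simp
next
  case (step y z)
  then have "z \<in> car P" unfolding edge_def by auto
  then obtain B' where B': "B' \<in> set Bs" "z \<in> B'" using v unfolding valid_def by auto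
  show ?case
  proof (rule ccontr)
    assume "z \<notin> B"
    then have "B' \<noteq> B" using B' by auto
    then have "cross b P B B' \<or> cross b P B' B" using valid_pair[OF v B B'(1)] by auto
    then show False
    proof
      assume "cross b P B B'"
      then show False using cross_noedge[of b P B B' y z] step B' by auto
    next
      assume "cross b P B' B"
      then show False using cross_noedge[of b P B' B z y] step B' edge_sym by blast
    qed
  qed
qed

lemma min_ex:
  assumes wf: "lpo_wf P" and S: "S \<subseteq> car P" "S \<noteq> {}"
  shows "\<exists>m\<in>S. \<forall>z\<in>S. (z, m) \<in> rel P \<longrightarrow> z = m"
proof -
  define D where "D m = {z\<in>S. (z, m) \<in> rel P}" for m
  obtain x where "x \<in> S" using S by auto
  then obtain m where m: "m \<in> S" "\<And>y. y \<in> S \<Longrightarrow> card (D m) \<le> card (D y)"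
    using ex_has_least_nat[of "\<lambda>y. y \<in> S" x "\<lambda>y. card (D y)"] by blast
  have fin: "finite S" using wf S finite_subset unfolding lpo_wf_def by blast
  have tr: "trans (rel P)" and an: "antisym (rel P)" and rf: "refl_on (car P) (rel P)"
    using wf unfolding lpo_wf_def by auto
  show ?thesis
  proof (intro bexI[OF _ m(1)] ballI impI)
    fix z assume z: "z \<in> S" "(z, m) \<in> rel P"
    show "z = m"
    proof (rule ccontr)
      assume ne: "z \<noteq> m"
      have "D z \<subseteq> D m" unfolding D_def using z tr by (auto dest: transD)
      moreover have "m \<in> D m" unfolding D_def using m(1) S rf by (auto simp: refl_on_def)
      moreover have "m \<notin> D z" unfolding D_def using z ne an by (auto dest: antisymD)
      ultimately have "D z \<subset> D m" by blast
      moreover have "finite (D m)" unfolding D_def using fin by simp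
      ultimately have "card (D z) < card (D m)" by (rule psubset_card_mono[rotated])
      then show False using m(2)[OF z(1)] by simp
    qed
  qed
qed

lemma split_lemma:
  assumes wf: "lpo_wf P" and S: "S \<subseteq> car P" and xy: "x \<in> S" "y \<in> S"
    and nc: "(x, y) \<notin> (edge b P S)\<^sup>*"
  shows "\<exists>S1 S2. S1 \<union> S2 = S \<and> S1 \<inter> S2 = {} \<and> S1 \<noteq> {} \<and> S2 \<noteq> {} \<and> cross b P S1 S2"
proof (cases b)
  case False
  define S1 where "S1 = {z. (x, z) \<in> (edge b P S)\<^sup>*}"
  have sub: "S1 \<subseteq> S" unfolding S1_def using rt_in[OF xy(1)] by blast
  have "x \<in> S1" unfolding S1_def by simp
  moreover have "y \<in> S - S1" unfolding S1_def using nc xy by simp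
  moreover have "cross b P S1 (S - S1)"
    unfolding cross_def
  proof (simp add: False, intro ballI conjI)
    fix z1 z2 assume z: "z1 \<in> S1" "z2 \<in> S - S1"
    have ne: "z1 \<noteq> z2" using z by auto
    show "(z1, z2) \<notin> rel P"
    proof
      assume "(z1, z2) \<in> rel P"
      then have "(z1, z2) \<in> edge b P S" using z ne sub False unfolding edge_def by auto
      then have "z2 \<in> S1" using z(1) unfolding S1_def by (auto intro: rtrancl_into_rtrancl)
      then show False using z by auto
    qed
    show "(z2, z1) \<notin> rel P"
    proof
      assume "(z2, z1) \<in> rel P"
      then have "(z1, z2) \<in> edge b P S" using z ne sub False unfolding edge_def by auto
      then have "z2 \<in> S1" using z(1) unfolding S1_def by (auto intro: rtrancl_into_rtrancl)
      then show False using z by auto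
    qed
  qed
  ultimately show ?thesis using sub by (intro exI[of _ S1] exI[of _ "S - S1"]) auto
next
  case True
  obtain m where m: "m \<in> S" "\<And>z. z \<in> S \<Longrightarrow> (z, m) \<in> rel P \<Longrightarrow> z = m"
    using min_ex[OF wf S] xy by blast
  define C where "C = {z. (m, z) \<in> (edge b P S)\<^sup>*}"
  have sub: "C \<subseteq> S" unfolding C_def using rt_in[OF m(1)] by blast
  have mC: "m \<in> C" unfolding C_def by simp
  have ne2: "S - C \<noteq> {}"
  proof
    assume "S - C = {}"
    then have "x \<in> C" "y \<in> C" using xy by auto
    then have "(x, m) \<in> (edge b P S)\<^sup>*" "(m, y) \<in> (edge b P S)\<^sup>*" unfolding C_def using rt_sym by auto
    then show False using nc by (meson rtrancl_trans)
  qed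
  have tr: "trans (rel P)" using wf unfolding lpo_wf_def by auto
  have key: "\<forall>t\<in>S - C. (c, t) \<in> rel P" if "(m, c) \<in> (edge b P S)\<^sup>*" for c
    using that
  proof (induction rule: rtrancl_induct)
    case base
    show ?case
    proof
      fix t assume t: "t \<in> S - C"
      then have tm: "t \<noteq> m" using mC by auto
      have "(m, t) \<notin> edge b P S"
      proof
        assume "(m, t) \<in> edge b P S"
        then have "t \<in> C" unfolding C_def by simp
        then show False using t by simp
      qed
      then have "(m, t) \<in> rel P \<or> (t, m) \<in> rel P" using t m(1) tm True unfolding edge_def by auto
      then show "(m, t) \<in> rel P" using m(2)[of t] t tm by auto
    qed
  next
    case (step c c')
    show ?case
    proof
      fix t assume t: "t \<in> S - C"
      have c'C: "c' \<in> C" unfolding C_def using step(1,2) by (auto intro: rtrancl_into_rtrancl)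
      then have tc: "t \<noteq> c'" using t by auto
      have "(c', t) \<notin> edge b P S"
      proof
        assume "(c', t) \<in> edge b P S"
        then have "t \<in> C" using c'C unfolding C_def by (auto intro: rtrancl_into_rtrancl)
        then show False using t by simp
      qed
      moreover have "c' \<in> S" using c'C sub by auto
      ultimately have cmp: "(c', t) \<in> rel P \<or> (t, c') \<in> rel P" using t tc True unfolding edge_def by auto
      have ct: "(c, t) \<in> rel P" using step(3) t by blast
      have inc: "(c, c') \<notin> rel P" using step(2) True unfolding edge_def by auto
      show "(c', t) \<in> rel P"
      proof (rule ccontr)
        assume "(c', t) \<notin> rel P"
        then have "(t, c') \<in> rel P" using cmp by auto
        then have "(c, c') \<in> rel P" using ct tr by (meson transD)
        then show False using inc by simp
      qed
    qed
  qed
  have "cross b P C (S - C)" unfolding cross_def using True key unfolding C_def by auto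
  then show ?thesis using sub mC ne2 by (intro exI[of _ C] exI[of _ "S - C"]) auto
qed

lemma valid_max:
  assumes wf: "lpo_wf P" and v: "valid b P Bs" and ne: "\<forall>B\<in>set Bs. B \<noteq> {}"
    and mx: "\<not> (\<exists>Bs'. valid b P Bs' \<and> (\<forall>B\<in>set Bs'. B \<noteq> {}) \<and> length Bs < length Bs')"
    and B: "B \<in> set Bs" and x: "x \<in> B"
  shows "B = bcomp b P x"
proof -
  have Bsub: "B \<subseteq> car P" using v B unfolding valid_def by auto
  have c1: "bcomp b P x \<subseteq> B" unfolding bcomp_def using stay[OF v B x] by blast
  show ?thesis
  proof (rule ccontr)
    assume "B \<noteq> bcomp b P x"
    then obtain y where y: "y \<in> B" "y \<notin> bcomp b P x" using c1 by blast
    have "(x, y) \<notin> (edge b P (car P))\<^sup>*" using y unfolding bcomp_def by simp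
    then have "(x, y) \<notin> (edge b P B)\<^sup>*" using rt_mono[OF Bsub] by blast
    then have "\<exists>S1 S2. S1 \<union> S2 = B \<and> S1 \<inter> S2 = {} \<and> S1 \<noteq> {} \<and> S2 \<noteq> {} \<and> cross b P S1 S2"
      by (rule split_lemma[OF wf Bsub x y(1)])
    then obtain S1 S2 where S12: "S1 \<union> S2 = B" "S1 \<inter> S2 = {}" "S1 \<noteq> {}" "S2 \<noteq> {}" "cross b P S1 S2"
      by (elim exE conjE) (rule that)
    obtain Bs1 Bs2 where sp: "Bs = Bs1 @ B # Bs2" using split_list[OF B] by blast
    define R where "R = (\<lambda>A B. cross b P A B \<and> A \<inter> B = {})"
    have sw: "sorted_wrt R Bs" using v unfolding valid_def R_def by simp
    then have sw1: "sorted_wrt R Bs1" and sw2: "sorted_wrt R Bs2"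
      and r1: "\<forall>A\<in>set Bs1. R A B \<and> (\<forall>C\<in>set Bs2. R A C)" and r2: "\<forall>C\<in>set Bs2. R B C"
      unfolding sp by (simp_all add: sorted_wrt_append)
    have Rm: "R A' C'" if "R A C" "A' \<subseteq> A" "C' \<subseteq> C" for A C A' C'
    proof -
      have "cross b P A C" "A \<inter> C = {}" using that(1) unfolding R_def by auto
      then show ?thesis using cross_mono[of b P A C A' C'] that(2,3) unfolding R_def by auto
    qed
    have s1B: "S1 \<subseteq> B" and s2B: "S2 \<subseteq> B" using S12 by auto
    define Bs' where "Bs' = Bs1 @ S1 # S2 # Bs2"
    have "sorted_wrt R Bs'"
      unfolding Bs'_def sorted_wrt_append
    proof (intro conjI)
      show "sorted_wrt R Bs1" by (rule sw1)
      have "R S1 S2" unfolding R_def using S12 by simp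
      moreover have "\<forall>C\<in>set Bs2. R S1 C" using r2 Rm[OF _ s1B subset_refl] by blast
      moreover have "\<forall>C\<in>set Bs2. R S2 C" using r2 Rm[OF _ s2B subset_refl] by blast
      ultimately show "sorted_wrt R (S1 # S2 # Bs2)" using sw2 by simp
      show "\<forall>x\<in>set Bs1. \<forall>y\<in>set (S1 # S2 # Bs2). R x y"
      proof (intro ballI)
        fix A C assume A: "A \<in> set Bs1" and C: "C \<in> set (S1 # S2 # Bs2)"
        then have "C = S1 \<or> C = S2 \<or> C \<in> set Bs2" by simp
        then show "R A C"
        proof (elim disjE)
          assume "C = S1" then show ?thesis using r1 A Rm[OF _ subset_refl s1B] by blast
        next
          assume "C = S2" then show ?thesis using r1 A Rm[OF _ subset_refl s2B] by blast
        next
          assume "C \<in> set Bs2" then show ?thesis using r1 A by blast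
        qed
      qed
    qed
    moreover have "\<Union>(set Bs') = car P"
    proof -
      have "\<Union>(set Bs') = \<Union>(set Bs)" unfolding Bs'_def sp using S12(1) by auto
      then show ?thesis using v unfolding valid_def by simp
    qed
    ultimately have "valid b P Bs'" unfolding valid_def R_def by simp
    moreover have "\<forall>B\<in>set Bs'. B \<noteq> {}" using ne S12(3,4) unfolding Bs'_def sp by simp
    moreover have "length Bs < length Bs'" unfolding Bs'_def sp by simp
    ultimately have "\<exists>Bs'. valid b P Bs' \<and> (\<forall>B\<in>set Bs'. B \<noteq> {}) \<and> length Bs < length Bs'"
      by (intro exI[of _ Bs'] conjI)
    then show False by (rule notE[OF mx])
  qed
qed

lemma valid_max_comps:
  assumes wf: "lpo_wf P" and v: "valid b P Bs" and ne: "\<forall>B\<in>set Bs. B \<noteq> {}"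
    and mx: "\<not> (\<exists>Bs'. valid b P Bs' \<and> (\<forall>B\<in>set Bs'. B \<noteq> {}) \<and> length Bs < length Bs')"
  shows "set Bs = bcomps b P"
proof
  show "set Bs \<subseteq> bcomps b P"
  proof
    fix B assume B: "B \<in> set Bs"
    then obtain x where x: "x \<in> B" using ne by blast
    then have "x \<in> car P" using v B unfolding valid_def by auto
    then show "B \<in> bcomps b P" unfolding bcomps_def using valid_max[OF wf v ne mx B x] by blast
  qed
  show "bcomps b P \<subseteq> set Bs"
  proof
    fix C assume "C \<in> bcomps b P"
    then obtain x where x: "x \<in> car P" "C = bcomp b P x" unfolding bcomps_def by blast
    then obtain B where B: "B \<in> set Bs" "x \<in> B" using v unfolding valid_def by auto
    then show "C \<in> set Bs" using valid_max[OF wf v ne mx B] x by simp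
  qed
qed

lemma nonempty_iff:
  assumes wf: "lpo_wf P" and B: "B \<subseteq> car P"
  shows "pom_of (restr P B) \<noteq> pom_one \<longleftrightarrow> B \<noteq> {}"
  using pom_one_iff[OF restr_wf[OF wf B]] by simp

lemma M:
  assumes wf: "lpo_wf P" and eq: "pom_of P = lst b Us" and ne: "\<forall>U\<in>set Us. U \<noteq> pom_one"
    and mx: "\<not> (\<exists>Vs. length Us < length Vs \<and> (\<forall>V\<in>set Vs. V \<noteq> pom_one) \<and> pom_of P = lst b Vs)"
  shows "set Us = (\<lambda>C. pom_of (restr P C)) ` bcomps b P"
proof -
  have "\<exists>Bs. Us = map (\<lambda>B. pom_of (restr P B)) Bs \<and> valid b P Bs"
    using eq by (rule iffD1[OF BC[OF wf]])
  then obtain Bs where Bs: "Us = map (\<lambda>B. pom_of (restr P B)) Bs" "valid b P Bs"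
    by (elim exE conjE) (rule that)
  have sub: "\<forall>B\<in>set Bs. B \<subseteq> car P" using Bs(2) unfolding valid_def by auto
  have neB: "\<forall>B\<in>set Bs. B \<noteq> {}" using ne sub nonempty_iff[OF wf] unfolding Bs(1) by auto
  have mxB: "\<not> (\<exists>Bs'. valid b P Bs' \<and> (\<forall>B\<in>set Bs'. B \<noteq> {}) \<and> length Bs < length Bs')"
  proof
    assume "\<exists>Bs'. valid b P Bs' \<and> (\<forall>B\<in>set Bs'. B \<noteq> {}) \<and> length Bs < length Bs'"
    then obtain Bs' where B': "valid b P Bs'" "\<forall>B\<in>set Bs'. B \<noteq> {}" "length Bs < length Bs'"
      by (elim exE conjE) (rule that)
    define Vs where "Vs = map (\<lambda>B. pom_of (restr P B)) Bs'"
    have "pom_of P = lst b Vs"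
      by (rule iffD2[OF BC[OF wf]]) (intro exI[of _ Bs'] conjI B'(1), simp add: Vs_def)
    moreover have "\<forall>V\<in>set Vs. V \<noteq> pom_one"
    proof -
      have "\<forall>B\<in>set Bs'. B \<subseteq> car P" using B'(1) unfolding valid_def by auto
      then show ?thesis using B'(2) nonempty_iff[OF wf] unfolding Vs_def by auto
    qed
    moreover have "length Us < length Vs" using B'(3) unfolding Vs_def Bs(1) by simp
    ultimately have "\<exists>Vs. length Us < length Vs \<and> (\<forall>V\<in>set Vs. V \<noteq> pom_one) \<and> pom_of P = lst b Vs"
      by (intro exI[of _ Vs] conjI)
    then show False by (rule notE[OF mx])
  qed
  show ?thesis using valid_max_comps[OF wf Bs(2) neB mxB] unfolding Bs(1) by simp
qed



lemma lst_split:
  assumes wf: "lpo_wf P" and eq: "pom_of P = lst b Us" and len: "length Us > 1"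
    and ne: "\<forall>U\<in>set Us. U \<noteq> pom_one"
  shows "\<exists>S T. S \<union> T = car P \<and> S \<inter> T = {} \<and> S \<noteq> {} \<and> T \<noteq> {} \<and> cross b P S T"
proof -
  have "\<exists>Bs. Us = map (\<lambda>B. pom_of (restr P B)) Bs \<and> valid b P Bs"
    using eq by (rule iffD1[OF BC[OF wf]])
  then obtain Bs where Bs: "Us = map (\<lambda>B. pom_of (restr P B)) Bs" "valid b P Bs"
    by (elim exE conjE) (rule that)
  have sub: "\<forall>B\<in>set Bs. B \<subseteq> car P" using Bs(2) unfolding valid_def by auto
  have neB: "\<forall>B\<in>set Bs. B \<noteq> {}" using ne sub nonempty_iff[OF wf] unfolding Bs(1) by auto
  obtain B0 Bs' where sp: "Bs = B0 # Bs'" using len Bs(1) by (cases Bs) auto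
  have "Bs' \<noteq> []" using len Bs(1) sp by auto
  then obtain B1 where B1: "B1 \<in> set Bs'" by (cases Bs') auto
  define T where "T = \<Union>(set Bs')"
  have v: "B0 \<union> T = car P" "\<forall>B\<in>set Bs'. cross b P B0 B \<and> B0 \<inter> B = {}"
    using Bs(2) unfolding valid_def sp T_def by auto
  have "cross b P B0 T" unfolding T_def by (rule cross_Union) (use v(2) in blast)
  moreover have "B0 \<inter> T = {}" using v(2) unfolding T_def by blast
  moreover have "B0 \<noteq> {}" using neB sp by simp
  moreover have "T \<noteq> {}" using neB sp B1 unfolding T_def by auto
  ultimately show ?thesis using v(1) by (intro exI[of _ B0] exI[of _ T]) simp
qed

lemma modes_excl:
  assumes ST: "S \<union> T = C" "S \<inter> T = {}" "S \<noteq> {}" "T \<noteq> {}" "cross True P S T"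
    and ST': "S' \<union> T' = C" "S' \<inter> T' = {}" "S' \<noteq> {}" "T' \<noteq> {}" "cross False P S' T'"
  shows False
proof -
  have c1: "S \<times> T \<subseteq> rel P" using ST(5) unfolding cross_def by simp
  have c2: "\<forall>x\<in>S'. \<forall>y\<in>T'. (x, y) \<notin> rel P \<and> (y, x) \<notin> rel P" using ST'(5) unfolding cross_def by simp
  have same: "s \<in> S' \<longleftrightarrow> t \<in> S'" if "s \<in> S" "t \<in> T" for s t
  proof -
    have st: "(s, t) \<in> rel P" using c1 that by auto
    have sC: "s \<in> C" and tC: "t \<in> C" using that ST(1) by auto
    show ?thesis
    proof
      assume "s \<in> S'"
      show "t \<in> S'"
      proof (rule ccontr)
        assume "t \<notin> S'" then have "t \<in> T'" using tC ST'(1) by auto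
        then show False using c2 \<open>s \<in> S'\<close> st by blast
      qed
    next
      assume "t \<in> S'"
      show "s \<in> S'"
      proof (rule ccontr)
        assume "s \<notin> S'" then have "s \<in> T'" using sC ST'(1) by auto
        then show False using c2 \<open>t \<in> S'\<close> st by blast
      qed
    qed
  qed
  obtain s0 where s0: "s0 \<in> S" using ST(3) by auto
  obtain t0 where t0: "t0 \<in> T" using ST(4) by auto
  have all: "z \<in> S' \<longleftrightarrow> s0 \<in> S'" if "z \<in> C" for z
  proof (cases "z \<in> S")
    case True then show ?thesis using same[OF True t0] same[OF s0 t0] by simp
  next
    case False then have "z \<in> T" using that ST(1) by auto
    then show ?thesis using same[OF s0] by simp
  qed
  show False
  proof (cases "s0 \<in> S'")
    case True
    obtain z where "z \<in> T'" using ST'(4) by auto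
    then show False using all[of z] True ST'(1,2) by auto
  next
    case False
    obtain z where "z \<in> S'" using ST'(3) by auto
    then show False using all[of z] False ST'(1) by auto
  qed
qed

lemma part_card:
  assumes wf: "lpo_wf P" and ST: "S \<union> T = car P" "S \<inter> T = {}" "S \<noteq> {}" "T \<noteq> {}"
  shows "card (car P) \<ge> 2"
proof -
  obtain s t where "s \<in> S" "t \<in> T" using ST by auto
  then have "s \<noteq> t" "s \<in> car P" "t \<in> car P" using ST by auto
  moreover have "finite (car P)" using wf unfolding lpo_wf_def by simp
  ultimately have "card {s, t} \<le> card (car P)" by (intro card_mono) auto
  then show ?thesis using \<open>s \<noteq> t\<close> by simp
qed

lemma step_unique:
  assumes len: "length Us > 1" and ne: "\<forall>Ui\<in>set Us. Ui \<noteq> pom_one" and eq: "U = lst b Us"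
    and mx: "\<not> (\<exists>Vs. length Vs > length Us \<and> (\<forall>Vi\<in>set Vs. Vi \<noteq> pom_one) \<and> U = lst b Vs)"
    and lds: "length ds = length Us"
    and IH: "\<forall>i<length Us. has_depth (Us ! i) (ds ! i) \<and> (\<forall>d'. has_depth (Us ! i) d' \<longrightarrow> d' = ds ! i)"
    and d2: "has_depth U d2"
  shows "d2 = Max (set ds) + 1"
proof -
  let ?P = "rep U"
  have wf: "lpo_wf ?P" by simp
  have eqP: "pom_of ?P = lst b Us" using eq by simp
  have mxP: "\<not> (\<exists>Vs. length Us < length Vs \<and> (\<forall>V\<in>set Vs. V \<noteq> pom_one) \<and> pom_of ?P = lst b Vs)"
    using mx by simp
  have "\<exists>S T. S \<union> T = car ?P \<and> S \<inter> T = {} \<and> S \<noteq> {} \<and> T \<noteq> {} \<and> cross b ?P S T"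
    by (rule lst_split[OF wf eqP len ne])
  then obtain S T where ST: "S \<union> T = car ?P" "S \<inter> T = {}" "S \<noteq> {}" "T \<noteq> {}" "cross b ?P S T"
    by (elim exE conjE) (rule that)
  have c2: "card (car ?P) \<ge> 2" by (rule part_card[OF wf ST(1-4)])
  have gen: "d2 = Max (set ds) + 1"
    if l2: "length Vs > 1" and ne2: "\<forall>Vi\<in>set Vs. Vi \<noteq> pom_one" and eq2: "U = lst b' Vs"
    and mx2: "\<not> (\<exists>Ws. length Ws > length Vs \<and> (\<forall>Wi\<in>set Ws. Wi \<noteq> pom_one) \<and> U = lst b' Ws)"
    and lds2: "length ds' = length Vs" and IH2: "\<forall>i<length Vs. has_depth (Vs ! i) (ds' ! i)"
    and d2e: "d2 = Max (set ds') + 1"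
    for b' Vs ds'
  proof (cases "b' = b")
    case False
    have eqP2: "pom_of ?P = lst b' Vs" using eq2 by simp
    have "\<exists>S T. S \<union> T = car ?P \<and> S \<inter> T = {} \<and> S \<noteq> {} \<and> T \<noteq> {} \<and> cross b' ?P S T"
      by (rule lst_split[OF wf eqP2 l2 ne2])
    then obtain S' T' where ST': "S' \<union> T' = car ?P" "S' \<inter> T' = {}" "S' \<noteq> {}" "T' \<noteq> {}" "cross b' ?P S' T'"
      by (elim exE conjE) (rule that)
    show ?thesis
    proof (cases b)
      case True
      then have "\<not> b'" using False by simp
      then show ?thesis using modes_excl[where P="?P", OF ST(1-4) _ ST'(1-4)] ST(5) ST'(5) True by simp
    next
      case bF: False
      then have "b'" using False by simp
      then show ?thesis using modes_excl[where P="?P", OF ST'(1-4) _ ST(1-4)] ST(5) ST'(5) bF by simp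
    qed
  next
    case True
    have eqP2: "pom_of ?P = lst b Vs" using eq2 True by simp
    have mxP2: "\<not> (\<exists>Ws. length Vs < length Ws \<and> (\<forall>W\<in>set Ws. W \<noteq> pom_one) \<and> pom_of ?P = lst b Ws)"
      using mx2 True by simp
    have sU: "set Us = set Vs"
      using M[OF wf eqP ne mxP] M[OF wf eqP2 ne2 mxP2] by simp
    have "set ds = set ds'"
    proof
      show "set ds \<subseteq> set ds'"
      proof
        fix d assume "d \<in> set ds"
        then obtain i where i: "i < length Us" "d = ds ! i" using lds by (metis in_set_conv_nth)
        then have "Us ! i \<in> set Vs" using sU by (metis nth_mem)
        then obtain j where j: "j < length Vs" "Vs ! j = Us ! i" by (metis in_set_conv_nth)
        then have "has_depth (Us ! i) (ds' ! j)" using IH2 by metis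
        then have "ds' ! j = d" using IH i by blast
        then show "d \<in> set ds'" using j lds2 by (metis nth_mem)
      qed
      show "set ds' \<subseteq> set ds"
      proof
        fix d assume "d \<in> set ds'"
        then obtain j where j: "j < length Vs" "d = ds' ! j" using lds2 by (metis in_set_conv_nth)
        then have "Vs ! j \<in> set Us" using sU by (metis nth_mem)
        then obtain i where i: "i < length Us" "Us ! i = Vs ! j" by (metis in_set_conv_nth)
        then have "has_depth (Us ! i) d" using IH2 j by metis
        then have "d = ds ! i" using IH i by blast
        then show "d \<in> set ds" using i lds by (metis nth_mem)
      qed
    qed
    then show ?thesis using d2e by simp
  qed
  show ?thesis
    using d2
  proof (cases rule: has_depth.cases)
    case depth_one
    then have "car ?P = {}" using pom_one_iff[OF wf] by simp
    then show ?thesis using c2 by simp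
  next
    case (depth_prim a)
    then have "card (car ?P) = 1" using pom_prim_card[OF wf] by simp
    then show ?thesis using c2 by simp
  next
    case (depth_seq Vs ds')
    then show ?thesis using gen[of Vs True ds'] by (simp add: seq_list_lst)
  next
    case (depth_par Vs ds')
    then show ?thesis using gen[of Vs False ds'] by (simp add: par_list_lst)
  qed
qed

lemma card_lst:
  assumes "length Vs > 1" "\<forall>V\<in>set Vs. V \<noteq> pom_one" "U = lst b Vs"
  shows "card (car (rep U)) \<ge> 2"
proof -
  have eqP: "pom_of (rep U) = lst b Vs" using assms(3) by simp
  have "\<exists>S T. S \<union> T = car (rep U) \<and> S \<inter> T = {} \<and> S \<noteq> {} \<and> T \<noteq> {} \<and> cross b (rep U) S T"
    by (rule lst_split[OF rep_wf eqP assms(1,2)])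
  then obtain S T where ST: "S \<union> T = car (rep U)" "S \<inter> T = {}" "S \<noteq> {}" "T \<noteq> {}"
    by (elim exE conjE) (rule that)
  show ?thesis by (rule part_card[OF rep_wf ST])
qed

lemma card_cases:
  assumes "has_depth U d"
  shows "(U = pom_one \<and> d = 0 \<and> card (car (rep U)) = 0) \<or> (card (car (rep U)) = 1 \<and> d = 1)
    \<or> card (car (rep U)) \<ge> 2"
  using assms
proof (cases rule: has_depth.cases)
  case depth_one
  then show ?thesis using pom_one_iff[OF rep_wf, of U] by simp
next
  case (depth_prim a)
  then show ?thesis using pom_prim_card[OF rep_wf, of U a] by simp
next
  case (depth_seq Us ds)
  then show ?thesis using card_lst[of Us U True] by (simp add: seq_list_lst)
next
  case (depth_par Us ds)
  then show ?thesis using card_lst[of Us U False] by (simp add: par_list_lst)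
qed

lemma depth_one_only: "has_depth (pom_one :: 'a pomset) d \<Longrightarrow> d = 0"
proof -
  assume h: "has_depth (pom_one :: 'a pomset) d"
  have e: "car (rep (pom_one :: 'a pomset)) = {}" using pom_one_iff[OF rep_wf[of "pom_one :: 'a pomset"]] by simp
  show "d = 0" using card_cases[OF h] e by auto
qed

lemma depth_prim_only: "has_depth (pom_prim a :: 'a pomset) d \<Longrightarrow> d = 1"
proof -
  assume h: "has_depth (pom_prim a :: 'a pomset) d"
  have e: "card (car (rep (pom_prim a :: 'a pomset))) = 1"
    using pom_prim_card[OF rep_wf[of "pom_prim a :: 'a pomset"]] by simp
  show "d = 1" using card_cases[OF h] e by auto
qed

lemma depth_unique: "has_depth U d \<Longrightarrow> \<forall>d'. has_depth U d' \<longrightarrow> d' = d"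
proof (induction rule: has_depth.induct)
  case depth_one
  show ?case
  proof (intro allI impI)
    fix d' assume h: "has_depth pom_one d'"
    show "d' = 0" using depth_one_only[OF h] .
  qed
next
  case (depth_prim a)
  show ?case
  proof (intro allI impI)
    fix d' assume h: "has_depth (pom_prim a) d'"
    show "d' = 1" using depth_prim_only[OF h] .
  qed
next
  case (depth_seq Us U ds)
  show ?case
    using step_unique[of Us U True ds] depth_seq by (auto simp: seq_list_lst)
next
  case (depth_par Us U ds)
  show ?case
    using step_unique[of Us U False ds] depth_par by (auto simp: par_list_lst)
qed

lemma depth_eq: "has_depth U d \<Longrightarrow> depth U = d"
  unfolding depth_def using depth_unique by blast



definition spH :: "'a lpo \<Rightarrow> bool" where
  "spH P \<longleftrightarrow> (\<forall>S \<subseteq> car P. card S \<ge> 2 \<longrightarrow>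
     (\<exists>b. \<exists>x\<in>S. \<exists>y\<in>S. (x, y) \<notin> (edge b P S)\<^sup>*))"

lemma edge_restr: "S \<subseteq> B \<Longrightarrow> edge b (restr P B) S = edge b P S"
  unfolding edge_def by auto

lemma spH_restr: "spH P \<Longrightarrow> B \<subseteq> car P \<Longrightarrow> spH (restr P B)"
  unfolding spH_def by (simp add: edge_restr)

lemma spH_D: "spH P \<Longrightarrow> S \<subseteq> car P \<Longrightarrow> card S \<ge> 2 \<Longrightarrow> \<exists>b. \<exists>x\<in>S. \<exists>y\<in>S. (x, y) \<notin> (edge b P S)\<^sup>*"
  unfolding spH_def by blast

lemma rt_map:
  assumes "\<And>a c. (a, c) \<in> E1 \<Longrightarrow> (h a, h c) \<in> E2" and "(a, c) \<in> E1\<^sup>*"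
  shows "(h a, h c) \<in> E2\<^sup>*"
  using assms(2)
proof (induction rule: rtrancl_induct)
  case base then show ?case by simp
next
  case (step y z) then show ?case using assms(1) by (meson rtrancl.rtrancl_into_rtrancl)
qed

lemma spH_iso:
  assumes iso: "lpo_iso Q P" and sp: "spH P"
  shows "spH Q"
  unfolding spH_def
proof (intro allI impI)
  fix X assume X: "X \<subseteq> car Q" and c: "card X \<ge> 2"
  obtain g where gb: "bij_betw g (car Q) (car P)"
    and gr: "\<And>x y. x\<in>car Q \<Longrightarrow> y\<in>car Q \<Longrightarrow> (x, y) \<in> rel Q \<longleftrightarrow> (g x, g y) \<in> rel P"
    using iso by (rule iso_get) blast
  have ginj: "inj_on g (car Q)" and gim: "g ` car Q = car P" using gb unfolding bij_betw_def by auto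
  let ?Y = "g ` X"
  have Ysub: "?Y \<subseteq> car P" using X gim by auto
  have "card ?Y = card X" using inj_on_subset[OF ginj X] by (rule card_image)
  then have "card ?Y \<ge> 2" using c by simp
  then have "\<exists>b. \<exists>x\<in>?Y. \<exists>y\<in>?Y. (x, y) \<notin> (edge b P ?Y)\<^sup>*" by (rule spH_D[OF sp Ysub])
  then obtain b x y where xy: "x \<in> ?Y" "y \<in> ?Y" "(x, y) \<notin> (edge b P ?Y)\<^sup>*"
    by blast
  obtain a where a: "a \<in> X" "x = g a" using xy(1) by blast
  obtain c' where c': "c' \<in> X" "y = g c'" using xy(2) by blast
  have em: "(g u, g v) \<in> edge b P ?Y" if "(u, v) \<in> edge b Q X" for u v
  proof -
    have uv: "u \<in> X" "v \<in> X" "u \<noteq> v" using that unfolding edge_def by auto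
    then have uvQ: "u \<in> car Q" "v \<in> car Q" using X by auto
    have "g u \<noteq> g v" using uv uvQ inj_onD[OF ginj] by blast
    then show ?thesis using that uv uvQ gr[of u v] gr[of v u] unfolding edge_def by auto
  qed
  have "(a, c') \<notin> (edge b Q X)\<^sup>*"
  proof
    assume "(a, c') \<in> (edge b Q X)\<^sup>*"
    then have "(g a, g c') \<in> (edge b P ?Y)\<^sup>*" using rt_map[of "edge b Q X" g] em by blast
    then show False using xy(3) a c' by simp
  qed
  then show "\<exists>b. \<exists>x\<in>X. \<exists>y\<in>X. (x, y) \<notin> (edge b Q X)\<^sup>*" using a(1) c'(1) by blast
qed

lemma spH_pom:
  assumes "lpo_wf P" "lpo_wf Q" "pom_of P = pom_of Q" "spH P" shows "spH Q"
  using assms pom_of_eq_iff lpo_iso_sym spH_iso by metis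

lemma stay_part:
  assumes ST: "X \<subseteq> S \<union> T" "S \<inter> T = {}" and cr: "cross b P S T" and x: "x \<in> S"
    and p: "(x, y) \<in> (edge b P X)\<^sup>*"
  shows "y \<in> S"
  using p
proof (induction rule: rtrancl_induct)
  case base then show ?case using x by simp
next
  case (step y z)
  then have "z \<in> X" unfolding edge_def by auto
  show ?case
  proof (rule ccontr)
    assume "z \<notin> S"
    then have "z \<in> T" using \<open>z \<in> X\<close> ST by auto
    then show False using cross_noedge[OF cr step(3)] step(2) by blast
  qed
qed

lemma spH_comb:
  assumes ST: "S \<union> T = car P" "S \<inter> T = {}" and cr: "cross b P S T"
    and s1: "spH (restr P S)" and s2: "spH (restr P T)"
  shows "spH P"
  unfolding spH_def
proof (intro allI impI)
  fix X assume X: "X \<subseteq> car P" and c: "card X \<ge> 2"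
  show "\<exists>b. \<exists>x\<in>X. \<exists>y\<in>X. (x, y) \<notin> (edge b P X)\<^sup>*"
  proof (cases "X \<subseteq> S")
    case True
    then have "\<exists>b. \<exists>x\<in>X. \<exists>y\<in>X. (x, y) \<notin> (edge b (restr P S) X)\<^sup>*"
      using s1 c unfolding spH_def by simp
    then show ?thesis using edge_restr[OF True] by metis
  next
    case nS: False
    show ?thesis
    proof (cases "X \<subseteq> T")
      case True
      then have "\<exists>b. \<exists>x\<in>X. \<exists>y\<in>X. (x, y) \<notin> (edge b (restr P T) X)\<^sup>*"
        using s2 c unfolding spH_def by simp
      then show ?thesis using edge_restr[OF True] by metis
    next
      case False
      obtain y where y: "y \<in> X" "y \<notin> S" using nS by blast
      obtain x where x: "x \<in> X" "x \<notin> T" using False by blast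
      have xS: "x \<in> S" using x X ST by auto
      have "(x, y) \<notin> (edge b P X)\<^sup>*"
        using stay_part[of X S T b P x y] X ST cr xS y by blast
      then show ?thesis using x y by blast
    qed
  qed
qed

lemma spH_pcmb:
  assumes u: "spH (rep U)" and v: "spH (rep V)"
  shows "spH (rep (pcmb b U V))"
proof -
  let ?P = "rep (pcmb b U V)"
  have "pom_of ?P = pcmb b U V" by simp
  then have "\<exists>S T. S \<union> T = car ?P \<and> S \<inter> T = {} \<and> cross b ?P S T
     \<and> U = pom_of (restr ?P S) \<and> V = pom_of (restr ?P T)" by (rule split2_dest[OF rep_wf])
  then obtain S T where ST: "S \<union> T = car ?P" "S \<inter> T = {}" "cross b ?P S T"
      "U = pom_of (restr ?P S)" "V = pom_of (restr ?P T)"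
    by (elim exE conjE) (rule that)
  have wS: "lpo_wf (restr ?P S)" and wT: "lpo_wf (restr ?P T)" using restr_wf[OF rep_wf] ST(1) by auto
  have "spH (restr ?P S)" by (rule spH_pom[OF rep_wf wS _ u]) (simp only: pom_of_rep, rule ST(4))
  moreover have "spH (restr ?P T)" by (rule spH_pom[OF rep_wf wT _ v]) (simp only: pom_of_rep, rule ST(5))
  ultimately show ?thesis by (rule spH_comb[OF ST(1-3)])
qed

lemma spH_sp: "U \<in> sp_pomsets \<Longrightarrow> spH (rep U)"
proof (induction rule: sp_pomsets.induct)
  case sp_one
  have "car (rep (pom_one :: 'a pomset)) = {}" using pom_one_iff[OF rep_wf[of "pom_one :: 'a pomset"]] by simp
  then show ?case unfolding spH_def by auto
next
  case (sp_prim a)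
  have f: "finite (car (rep (pom_prim a :: 'a pomset)))" using rep_wf unfolding lpo_wf_def by blast
  have "card (car (rep (pom_prim a :: 'a pomset))) = 1"
    using pom_prim_card[OF rep_wf[of "pom_prim a :: 'a pomset"]] by simp
  then have "\<And>S. S \<subseteq> car (rep (pom_prim a :: 'a pomset)) \<Longrightarrow> card S \<le> 1"
    using card_mono[OF f] by metis
  then show ?case unfolding spH_def by (meson numeral_le_one_iff semiring_norm(69) order_trans)
next
  case (sp_seq U V)
  then show ?case using spH_pcmb[of U V True] by (simp add: pcmb_def)
next
  case (sp_par U V)
  then show ?case using spH_pcmb[of U V False] by (simp add: pcmb_def)
qed



lemma valid_len:
  assumes wf: "lpo_wf P" and v: "valid b P Bs" and ne: "\<forall>B\<in>set Bs. B \<noteq> {}"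
  shows "length Bs \<le> card (car P)"
proof -
  have sw: "sorted_wrt (\<lambda>A B. cross b P A B \<and> A \<inter> B = {}) Bs" using v unfolding valid_def by simp
  have dist: "distinct Bs"
    unfolding distinct_conv_nth
  proof (intro allI impI)
    fix i j assume ij: "i < length Bs" "j < length Bs" "i \<noteq> j"
    have ni: "Bs ! i \<noteq> {}" using ne ij(1) by simp
    show "Bs ! i \<noteq> Bs ! j"
    proof (cases "i < j")
      case True
      then have "Bs ! i \<inter> Bs ! j = {}" using sorted_wrt_nth_less[OF sw True ij(2)] by simp
      then show ?thesis using ni by auto
    next
      case False
      then have "j < i" using ij by simp
      then have "Bs ! j \<inter> Bs ! i = {}" using sorted_wrt_nth_less[OF sw _ ij(1)] by simp
      then show ?thesis using ni by auto
    qed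
  qed
  define h where "h B = (SOME x. x \<in> B)" for B :: "nat set"
  have hB: "h B \<in> B" if "B \<in> set Bs" for B unfolding h_def using ne that by (simp add: some_in_eq)
  have inj: "inj_on h (set Bs)"
  proof (rule inj_onI)
    fix A B assume AB: "A \<in> set Bs" "B \<in> set Bs" "h A = h B"
    show "A = B"
    proof (rule ccontr)
      assume "A \<noteq> B"
      then have "A \<inter> B = {}" using valid_pair[OF v AB(1,2)] by auto
      then show False using hB[OF AB(1)] hB[OF AB(2)] AB(3) by auto
    qed
  qed
  have "h ` set Bs \<subseteq> car P" using hB v unfolding valid_def by auto
  moreover have "finite (car P)" using wf unfolding lpo_wf_def by simp
  ultimately have "card (set Bs) \<le> card (car P)" using card_inj_on_le[OF inj] by blast
  then show ?thesis using distinct_card[OF dist] by simp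
qed

lemma exist_aux: "\<forall>P. lpo_wf P \<and> spH P \<and> card (car P) = n \<longrightarrow> (\<exists>d. has_depth (pom_of P) d)"
proof (induction n rule: less_induct)
  case (less n)
  show ?case
  proof (intro allI impI, elim conjE)
    fix P :: "'a lpo" assume wf: "lpo_wf P" and sp: "spH P" and cn: "card (car P) = n"
    have fin: "finite (car P)" using wf unfolding lpo_wf_def by simp
    consider "n = 0" | "n = 1" | "n \<ge> 2" by arith
    then show "\<exists>d. has_depth (pom_of P) d"
    proof cases
      case 1
      then have "car P = {}" using cn fin by simp
      then have "pom_of P = pom_one" using pom_one_iff[OF wf] by simp
      then show ?thesis using depth_one by metis
    next
      case 2
      then obtain a where "pom_of P = pom_prim a" using card1_prim[OF wf] cn by blast
      then show ?thesis using depth_prim by metis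
    next
      case 3
      have "\<exists>b. \<exists>x\<in>car P. \<exists>y\<in>car P. (x, y) \<notin> (edge b P (car P))\<^sup>*"
        by (rule spH_D[OF sp subset_refl]) (use cn 3 in simp)
      then obtain b x y where xy: "x \<in> car P" "y \<in> car P" "(x, y) \<notin> (edge b P (car P))\<^sup>*"
        by blast
      define Q where "Q Bs \<longleftrightarrow> valid b P Bs \<and> (\<forall>B\<in>set Bs. B \<noteq> {})" for Bs
      have Q0: "Q [car P]" unfolding Q_def valid_def using xy by auto
      have Qb: "\<forall>Bs. Q Bs \<longrightarrow> length Bs < card (car P) + 1"
        using valid_len[OF wf] unfolding Q_def by (auto simp: less_Suc_eq_le)
      obtain Bs where QBs: "Q Bs" and gr: "\<And>Bs'. Q Bs' \<Longrightarrow> length Bs' \<le> length Bs"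
        using Lattices_Big.ex_has_greatest_nat[of Q "[car P]" length, OF Q0 Qb] by blast
      have v: "valid b P Bs" and ne: "\<forall>B\<in>set Bs. B \<noteq> {}" using QBs unfolding Q_def by auto
      have mx: "\<not> (\<exists>Bs'. valid b P Bs' \<and> (\<forall>B\<in>set Bs'. B \<noteq> {}) \<and> length Bs < length Bs')"
      proof
        assume "\<exists>Bs'. valid b P Bs' \<and> (\<forall>B\<in>set Bs'. B \<noteq> {}) \<and> length Bs < length Bs'"
        then obtain Bs' where "valid b P Bs'" "\<forall>B\<in>set Bs'. B \<noteq> {}" "length Bs < length Bs'"
          by (elim exE conjE) (rule that)
        then show False using gr[of Bs'] unfolding Q_def by simp
      qed
      have sBs: "set Bs = bcomps b P" by (rule valid_max_comps[OF wf v ne mx])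
      have cxy: "bcomp b P x \<noteq> bcomp b P y"
      proof -
        have "y \<in> bcomp b P y" unfolding bcomp_def by simp
        moreover have "y \<notin> bcomp b P x" unfolding bcomp_def using xy(3) by simp
        ultimately show ?thesis by auto
      qed
      have "{bcomp b P x, bcomp b P y} \<subseteq> set Bs" unfolding sBs bcomps_def using xy by auto
      moreover have "card {bcomp b P x, bcomp b P y} = 2" using cxy by simp
      ultimately have c2: "card (set Bs) \<ge> 2" by (metis card_mono List.finite_set)
      then have len: "length Bs > 1" using card_length[of Bs] by linarith
      have sub: "\<forall>B\<in>set Bs. B \<subseteq> car P" using v unfolding valid_def by auto
      have small: "card B < n" if B: "B \<in> set Bs" for B
      proof -
        obtain B' where B': "B' \<in> set Bs" "B' \<noteq> B"
        proof (rule ccontr)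
          assume "\<not> thesis"
          then have "\<forall>B'\<in>set Bs. B' = B" using that by blast
          then have "set Bs \<subseteq> {B}" by auto
          then have "card (set Bs) \<le> 1" using card_mono[of "{B}" "set Bs"] by simp
          then show False using c2 by simp
        qed
        have "B \<inter> B' = {}" using valid_pair[OF v B B'(1)] B'(2) by auto
        moreover have "B' \<noteq> {}" "B' \<subseteq> car P" using ne sub B'(1) by auto
        ultimately have "B \<subset> car P" using sub B by blast
        then show ?thesis using psubset_card_mono[OF fin] cn by blast
      qed
      have IHB: "\<exists>d. has_depth (pom_of (restr P B)) d" if B: "B \<in> set Bs" for B
      proof -
        have "B \<subseteq> car P" using sub B by blast
        then have "lpo_wf (restr P B) \<and> spH (restr P B) \<and> card (car (restr P B)) = card B"
          using restr_wf[OF wf] spH_restr[OF sp] by simp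
        then show ?thesis using less[OF small[OF B]] by blast
      qed
      define Us where "Us = map (\<lambda>B. pom_of (restr P B)) Bs"
      define ds where "ds = map (\<lambda>U. SOME d. has_depth U d) Us"
      have lds: "length ds = length Us" unfolding ds_def by simp
      have hd: "\<forall>i<length Us. has_depth (Us ! i) (ds ! i)"
      proof (intro allI impI)
        fix i assume i: "i < length Us"
        then have "Bs ! i \<in> set Bs" unfolding Us_def by simp
        then have "\<exists>d. has_depth (Us ! i) d" using IHB i unfolding Us_def by simp
        then show "has_depth (Us ! i) (ds ! i)" unfolding ds_def using i by (simp add: someI_ex)
      qed
      have eq: "pom_of P = lst b Us"
        by (rule iffD2[OF BC[OF wf]]) (intro exI[of _ Bs] conjI v, simp add: Us_def)
      have neU: "\<forall>U\<in>set Us. U \<noteq> pom_one" using ne sub nonempty_iff[OF wf] unfolding Us_def by auto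
      have mxU: "\<not> (\<exists>Vs. length Vs > length Us \<and> (\<forall>Vi\<in>set Vs. Vi \<noteq> pom_one) \<and> pom_of P = lst b Vs)"
      proof
        assume "\<exists>Vs. length Vs > length Us \<and> (\<forall>Vi\<in>set Vs. Vi \<noteq> pom_one) \<and> pom_of P = lst b Vs"
        then obtain Vs where Vs: "length Vs > length Us" "\<forall>Vi\<in>set Vs. Vi \<noteq> pom_one" "pom_of P = lst b Vs"
          by (elim exE conjE) (rule that)
        have "\<exists>Bs'. Vs = map (\<lambda>B. pom_of (restr P B)) Bs' \<and> valid b P Bs'"
          using Vs(3) by (rule iffD1[OF BC[OF wf]])
        then obtain Bs' where B': "Vs = map (\<lambda>B. pom_of (restr P B)) Bs'" "valid b P Bs'"
          by (elim exE conjE) (rule that)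
        have "\<forall>B\<in>set Bs'. B \<subseteq> car P" using B'(2) unfolding valid_def by auto
        then have "\<forall>B\<in>set Bs'. B \<noteq> {}" using Vs(2) nonempty_iff[OF wf] unfolding B'(1) by auto
        moreover have "length Bs < length Bs'" using Vs(1) B'(1) unfolding Us_def by simp
        ultimately have "\<exists>Bs'. valid b P Bs' \<and> (\<forall>B\<in>set Bs'. B \<noteq> {}) \<and> length Bs < length Bs'"
          using B'(2) by (intro exI[of _ Bs'] conjI)
        then show False by (rule notE[OF mx])
      qed
      have lenU: "length Us > 1" using len unfolding Us_def by simp
      show ?thesis
      proof (cases b)
        case True
        have "has_depth (pom_of P) (Max (set ds) + 1)"
          by (rule depth_seq[OF lenU neU _ _ lds hd]) (use eq mxU True in \<open>simp_all add: seq_list_lst\<close>)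
        then show ?thesis by blast
      next
        case False
        have "has_depth (pom_of P) (Max (set ds) + 1)"
          by (rule depth_par[OF lenU neU _ _ lds hd]) (use eq mxU False in \<open>simp_all add: par_list_lst\<close>)
        then show ?thesis by blast
      qed
    qed
  qed
qed

lemma sp_depth_ex: "U \<in> sp_pomsets \<Longrightarrow> \<exists>d. has_depth U d"
  using exist_aux[rule_format, of "rep U"] spH_sp[of U] by simp

lemma sp_depth: "U \<in> sp_pomsets \<Longrightarrow> has_depth U (depth U)"
  using sp_depth_ex depth_eq by metis



lemma all_conn:
  assumes ST: "S \<union> T = C" "S \<inter> T = {}" "S \<noteq> {}" "T \<noteq> {}"
    and ed: "\<And>s t. s \<in> S \<Longrightarrow> t \<in> T \<Longrightarrow> (s, t) \<in> edge b P C"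
    and x: "x \<in> C" and z: "z \<in> C"
  shows "(x, z) \<in> (edge b P C)\<^sup>*"
proof -
  obtain s0 where s0: "s0 \<in> S" using ST(3) by auto
  obtain t0 where t0: "t0 \<in> T" using ST(4) by auto
  have e2: "(t, s) \<in> edge b P C" if "s \<in> S" "t \<in> T" for s t using edge_sym ed[OF that] by blast
  consider "x \<in> S" "z \<in> S" | "x \<in> S" "z \<in> T" | "x \<in> T" "z \<in> S" | "x \<in> T" "z \<in> T"
    using x z ST(1) by blast
  then show ?thesis
  proof cases
    case 1
    have "(x, t0) \<in> edge b P C" "(t0, z) \<in> edge b P C" using ed[OF 1(1) t0] e2[OF 1(2) t0] by auto
    then show ?thesis by (meson r_into_rtrancl rtrancl_trans)
  next
    case 2 then show ?thesis using ed by blast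
  next
    case 3 then show ?thesis using e2 by blast
  next
    case 4
    have "(x, s0) \<in> edge b P C" "(s0, z) \<in> edge b P C" using e2[OF s0 4(1)] ed[OF s0 4(2)] by auto
    then show ?thesis by (meson r_into_rtrancl rtrancl_trans)
  qed
qed

lemma comp_of_connected:
  assumes v: "valid b P Bs" and B: "B \<in> set Bs" and x: "x \<in> B"
    and c: "\<And>z. z \<in> B \<Longrightarrow> (x, z) \<in> (edge b P B)\<^sup>*"
  shows "B = bcomp b P x"
proof
  have Bsub: "B \<subseteq> car P" using v B unfolding valid_def by auto
  show "B \<subseteq> bcomp b P x" unfolding bcomp_def using c rt_mono[OF Bsub] by blast
  show "bcomp b P x \<subseteq> B" unfolding bcomp_def using stay[OF v B x] by blast
qed

lemma LB:
  assumes hA: "has_depth A d" and C: "C \<subseteq> car (rep A)" "C \<noteq> car (rep A)" and x: "x \<in> C"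
    and cc: "C = bcomp b (rep A) x" and hC: "has_depth (pom_of (restr (rep A) C)) d'"
  shows "d' < d"
proof -
  let ?P = "rep A"
  have wf: "lpo_wf ?P" by simp
  have gen: "d' < d"
    if l2: "length Vs > 1" and ne2: "\<forall>Vi\<in>set Vs. Vi \<noteq> pom_one" and eq2: "A = lst b' Vs"
    and mx2: "\<not> (\<exists>Ws. length Ws > length Vs \<and> (\<forall>Wi\<in>set Ws. Wi \<noteq> pom_one) \<and> A = lst b' Ws)"
    and lds2: "length ds = length Vs" and IH2: "\<forall>i<length Vs. has_depth (Vs ! i) (ds ! i)"
    and de: "d = Max (set ds) + 1"
    for b' Vs ds
  proof (cases "b' = b")
    case False
    have eqP2: "pom_of ?P = lst b' Vs" using eq2 by simp
    have "\<exists>S T. S \<union> T = car ?P \<and> S \<inter> T = {} \<and> S \<noteq> {} \<and> T \<noteq> {} \<and> cross b' ?P S T"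
      by (rule lst_split[OF wf eqP2 l2 ne2])
    then obtain S T where ST: "S \<union> T = car ?P" "S \<inter> T = {}" "S \<noteq> {}" "T \<noteq> {}" "cross b' ?P S T"
      by (elim exE conjE) (rule that)
    have ed: "(s, t) \<in> edge b ?P (car ?P)" if "s \<in> S" "t \<in> T" for s t
    proof -
      have "s \<noteq> t" "s \<in> car ?P" "t \<in> car ?P" using that ST(1,2) by auto
      then show ?thesis using ST(5) that False unfolding cross_def edge_def by (cases b) auto
    qed
    have "car ?P \<subseteq> C"
    proof
      fix z assume "z \<in> car ?P"
      then have "(x, z) \<in> (edge b ?P (car ?P))\<^sup>*" using all_conn[OF ST(1-4) ed] x C(1) by blast
      then show "z \<in> C" using cc unfolding bcomp_def by simp
    qed
    then show ?thesis using C by blast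
  next
    case True
    have eqP2: "pom_of ?P = lst b Vs" using eq2 True by simp
    have mxP2: "\<not> (\<exists>Ws. length Vs < length Ws \<and> (\<forall>W\<in>set Ws. W \<noteq> pom_one) \<and> pom_of ?P = lst b Ws)"
      using mx2 True by simp
    have sV: "set Vs = (\<lambda>C. pom_of (restr ?P C)) ` bcomps b ?P" by (rule M[OF wf eqP2 ne2 mxP2])
    have "C \<in> bcomps b ?P" unfolding bcomps_def using cc x C(1) by blast
    then have "pom_of (restr ?P C) \<in> set Vs" using sV by blast
    then obtain i where i: "i < length Vs" "Vs ! i = pom_of (restr ?P C)" by (metis in_set_conv_nth)
    then have "has_depth (pom_of (restr ?P C)) (ds ! i)" using IH2 by metis
    then have "d' = ds ! i" using depth_unique hC by blast
    moreover have "ds ! i \<in> set ds" using i lds2 by simp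
    ultimately have "d' \<le> Max (set ds)" by simp
    then show ?thesis using de by simp
  qed
  show ?thesis
    using hA
  proof (cases rule: has_depth.cases)
    case depth_one
    then have "car ?P = {}" using pom_one_iff[OF wf] by simp
    then show ?thesis using x C by blast
  next
    case (depth_prim a)
    then have "card (car ?P) = 1" using pom_prim_card[OF wf] by simp
    then obtain y where "car ?P = {y}" by (meson card_1_singletonE)
    then have "C = car ?P" using x C(1) by auto
    then show ?thesis using C(2) by blast
  next
    case (depth_seq Vs ds)
    then show ?thesis using gen[of Vs True ds] by (simp add: seq_list_lst)
  next
    case (depth_par Vs ds)
    then show ?thesis using gen[of Vs False ds] by (simp add: par_list_lst)
  qed
qed

lemma unit_r: "pcmb b A pom_one = A"
proof -
  let ?P = "rep A"
  have "cross b ?P (car ?P) {}" unfolding cross_def by simp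
  then have "pom_of ?P = pcmb b (pom_of (restr ?P (car ?P))) (pom_of (restr ?P {}))"
    by (intro split2_intro) auto
  moreover have "pom_of (restr ?P {}) = pom_one"
    using pom_one_iff[OF restr_wf[OF rep_wf, of "{}"]] by simp
  ultimately show ?thesis by simp
qed

lemma pcmb_ne:
  assumes "A \<noteq> pom_one \<or> B \<noteq> pom_one" shows "pcmb b A B \<noteq> pom_one"
proof
  assume e: "pcmb b A B = pom_one"
  let ?P = "rep (pcmb b A B)"
  have "pom_of ?P = pcmb b A B" by simp
  then have "\<exists>S T. S \<union> T = car ?P \<and> S \<inter> T = {} \<and> cross b ?P S T
     \<and> A = pom_of (restr ?P S) \<and> B = pom_of (restr ?P T)" by (rule split2_dest[OF rep_wf])
  then obtain S T where ST: "S \<union> T = car ?P" "A = pom_of (restr ?P S)" "B = pom_of (restr ?P T)"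
    by (elim exE conjE) (rule that)
  have "car ?P = {}" using e pom_one_iff[OF rep_wf, of "pcmb b A B"] by simp
  then have "S = {}" "T = {}" using ST(1) by auto
  have e0: "pom_of (restr ?P {}) = pom_one" using pom_one_iff[OF restr_wf[OF rep_wf, of "{}"]] by simp
  have "A = pom_one" using ST(2) \<open>S = {}\<close> e0 by (simp only:)
  moreover have "B = pom_one" using ST(3) \<open>T = {}\<close> e0 by (simp only:)
  ultimately show False using assms by simp
qed



lemma seq_ne: "A \<noteq> pom_one \<or> B \<noteq> pom_one \<Longrightarrow> pom_seq A B \<noteq> pom_one"
  using pcmb_ne[of A B True] by (simp add: pcmb_def)

lemma par_ne: "A \<noteq> pom_one \<or> B \<noteq> pom_one \<Longrightarrow> pom_par A B \<noteq> pom_one"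
  using pcmb_ne[of A B False] by (simp add: pcmb_def)

lemma len3: "length Bs = 3 \<Longrightarrow> \<exists>a b c. Bs = [a, b, c]"
  by (auto simp: numeral_3_eq_3 length_Suc_conv)

lemma len2: "length Bs = 2 \<Longrightarrow> \<exists>a b. Bs = [a, b]"
  by (auto simp: numeral_2_eq_2 length_Suc_conv)

lemma step_lb_A:
  assumes Zne: "Z \<noteq> pom_one" and VW: "V \<noteq> pom_one \<or> W \<noteq> pom_one"
    and Zs: "Z = pom_par X Y" and Xne: "X \<noteq> pom_one" and Yne: "Y \<noteq> pom_one"
    and hA: "has_depth (pom_seq V (pom_seq Z W)) d3" and hZ: "has_depth Z d2"
  shows "d2 < d3"
proof -
  let ?A = "pom_seq V (pom_seq Z W)"
  let ?P = "rep ?A"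
  have wf: "lpo_wf ?P" by simp
  have "lst True [V, Z, W] = ?A" using unit_r[of True W] by (simp add: pcmb_def)
  then have "pom_of ?P = lst True [V, Z, W]" by simp
  then have "\<exists>Bs. [V, Z, W] = map (\<lambda>B. pom_of (restr ?P B)) Bs \<and> valid True ?P Bs"
    by (rule iffD1[OF BC[OF wf]])
  then obtain Bs where Bs: "[V, Z, W] = map (\<lambda>B. pom_of (restr ?P B)) Bs" "valid True ?P Bs"
    by (elim exE conjE) (rule that)
  have "length Bs = 3" using arg_cong[OF Bs(1), of length] by simp
  then obtain BV BZ BW where B3: "Bs = [BV, BZ, BW]" using len3 by blast
  have VZW: "V = pom_of (restr ?P BV)" "Z = pom_of (restr ?P BZ)" "W = pom_of (restr ?P BW)"
    using Bs(1) unfolding B3 by simp_all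
  have v: "BV \<union> BZ \<union> BW = car ?P" "BV \<inter> BZ = {}" "BZ \<inter> BW = {}"
    using Bs(2) unfolding valid_def B3 by auto
  have BZsub: "BZ \<subseteq> car ?P" and BVsub: "BV \<subseteq> car ?P" and BWsub: "BW \<subseteq> car ?P" using v(1) by auto
  have BZne: "BZ \<noteq> {}" using Zne VZW(2) nonempty_iff[OF wf BZsub] by simp
  have BZneq: "BZ \<noteq> car ?P"
  proof
    assume e: "BZ = car ?P"
    show False using VW
    proof
      assume "V \<noteq> pom_one"
      then have "BV \<noteq> {}" using VZW(1) nonempty_iff[OF wf BVsub] by simp
      then show False using v(2) BVsub e by blast
    next
      assume "W \<noteq> pom_one"
      then have "BW \<noteq> {}" using VZW(3) nonempty_iff[OF wf BWsub] by simp
      then show False using v(3) BWsub e by blast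
    qed
  qed
  obtain x where x: "x \<in> BZ" using BZne by blast
  have wZ: "lpo_wf (restr ?P BZ)" using restr_wf[OF wf BZsub] .
  have "pom_of (restr ?P BZ) = pcmb False X Y" using VZW(2) Zs by (simp add: pcmb_def)
  then have "\<exists>S T. S \<union> T = car (restr ?P BZ) \<and> S \<inter> T = {} \<and> cross False (restr ?P BZ) S T
     \<and> X = pom_of (restr (restr ?P BZ) S) \<and> Y = pom_of (restr (restr ?P BZ) T)"
    by (rule split2_dest[OF wZ])
  then obtain S T where ST: "S \<union> T = BZ" "S \<inter> T = {}" "cross False (restr ?P BZ) S T"
      "X = pom_of (restr (restr ?P BZ) S)" "Y = pom_of (restr (restr ?P BZ) T)"
    by (elim exE conjE) (rule that, simp_all)
  have SsubZ: "S \<subseteq> BZ" and TsubZ: "T \<subseteq> BZ" using ST(1) by auto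
  have Ssub: "S \<subseteq> car ?P" and Tsub: "T \<subseteq> car ?P" using SsubZ TsubZ BZsub by auto
  have Sne: "S \<noteq> {}" using Xne ST(4) nonempty_iff[OF wf Ssub] by (simp add: restr_restr[OF SsubZ])
  have Tne: "T \<noteq> {}" using Yne ST(5) nonempty_iff[OF wf Tsub] by (simp add: restr_restr[OF TsubZ])
  have ed: "(s, t) \<in> edge True ?P BZ" if "s \<in> S" "t \<in> T" for s t
  proof -
    have "s \<noteq> t" "s \<in> BZ" "t \<in> BZ" using that ST(2) SsubZ TsubZ by auto
    then show ?thesis using ST(3) that unfolding cross_def edge_def by auto
  qed
  have cc: "BZ = bcomp True ?P x"
  proof (rule comp_of_connected[OF Bs(2) _ x])
    show "BZ \<in> set Bs" unfolding B3 by simp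
    fix z assume "z \<in> BZ"
    then show "(x, z) \<in> (edge True ?P BZ)\<^sup>*" using all_conn[OF ST(1) ST(2) Sne Tne ed] x by blast
  qed
  have hC: "has_depth (pom_of (restr ?P BZ)) d2" using hZ VZW(2) by simp
  show ?thesis by (rule LB[OF hA BZsub BZneq x cc hC])
qed

lemma step_lb_B:
  assumes Xne: "X \<noteq> pom_one" and Ys: "Y = pom_seq V (pom_seq Z' W)" and Z'ne: "Z' \<noteq> pom_one"
    and VW: "V \<noteq> pom_one \<or> W \<noteq> pom_one"
    and hZ: "has_depth (pom_par X Y) d2" and hY: "has_depth Y d1"
  shows "d1 < d2"
proof -
  let ?Z = "pom_par X Y"
  let ?P = "rep ?Z"
  have wf: "lpo_wf ?P" by simp
  have Yne: "Y \<noteq> pom_one" using Ys seq_ne[of Z' W] seq_ne[of V "pom_seq Z' W"] Z'ne by simp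
  have "lst False [X, Y] = ?Z" using unit_r[of False Y] by (simp add: pcmb_def)
  then have "pom_of ?P = lst False [X, Y]" by simp
  then have "\<exists>Bs. [X, Y] = map (\<lambda>B. pom_of (restr ?P B)) Bs \<and> valid False ?P Bs"
    by (rule iffD1[OF BC[OF wf]])
  then obtain Bs where Bs: "[X, Y] = map (\<lambda>B. pom_of (restr ?P B)) Bs" "valid False ?P Bs"
    by (elim exE conjE) (rule that)
  have "length Bs = 2" using arg_cong[OF Bs(1), of length] by simp
  then obtain BX BY where B2: "Bs = [BX, BY]" using len2 by blast
  have XY: "X = pom_of (restr ?P BX)" "Y = pom_of (restr ?P BY)"
    using Bs(1) unfolding B2 by simp_all
  have v: "BX \<union> BY = car ?P" "BX \<inter> BY = {}"
    using Bs(2) unfolding valid_def B2 by auto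
  have BXsub: "BX \<subseteq> car ?P" and BYsub: "BY \<subseteq> car ?P" using v(1) by auto
  have BYne: "BY \<noteq> {}" using Yne XY(2) nonempty_iff[OF wf BYsub] by simp
  have BXne: "BX \<noteq> {}" using Xne XY(1) nonempty_iff[OF wf BXsub] by simp
  have BYneq: "BY \<noteq> car ?P" using BXne BXsub v(2) by blast
  obtain x where x: "x \<in> BY" using BYne by blast
  have wY: "lpo_wf (restr ?P BY)" using restr_wf[OF wf BYsub] .
  have "pom_of (restr ?P BY) = pcmb True V (pom_seq Z' W)" using XY(2) Ys by (simp add: pcmb_def)
  then have "\<exists>S T. S \<union> T = car (restr ?P BY) \<and> S \<inter> T = {} \<and> cross True (restr ?P BY) S T
     \<and> V = pom_of (restr (restr ?P BY) S) \<and> pom_seq Z' W = pom_of (restr (restr ?P BY) T)"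
    by (rule split2_dest[OF wY])
  then obtain S1 T1 where ST1: "S1 \<union> T1 = BY" "S1 \<inter> T1 = {}" "cross True (restr ?P BY) S1 T1"
      "V = pom_of (restr (restr ?P BY) S1)" "pom_seq Z' W = pom_of (restr (restr ?P BY) T1)"
    by (elim exE conjE) (rule that, simp_all)
  have S1sub: "S1 \<subseteq> BY" and T1sub: "T1 \<subseteq> BY" using ST1(1) by auto
  have wT1: "lpo_wf (restr ?P T1)" using restr_wf[OF wf] T1sub BYsub by blast
  have "pom_of (restr ?P T1) = pcmb True Z' W" using ST1(5) by (simp add: pcmb_def restr_restr[OF T1sub])
  then have "\<exists>S T. S \<union> T = car (restr ?P T1) \<and> S \<inter> T = {} \<and> cross True (restr ?P T1) S T
     \<and> Z' = pom_of (restr (restr ?P T1) S) \<and> W = pom_of (restr (restr ?P T1) T)"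
    by (rule split2_dest[OF wT1])
  then obtain S2 T2 where ST2: "S2 \<union> T2 = T1" "S2 \<inter> T2 = {}" "cross True (restr ?P T1) S2 T2"
      "Z' = pom_of (restr (restr ?P T1) S2)" "W = pom_of (restr (restr ?P T1) T2)"
    by (elim exE conjE) (rule that, simp_all)
  have S2sub: "S2 \<subseteq> T1" and T2sub: "T2 \<subseteq> T1" using ST2(1) by auto
  have S2P: "S2 \<subseteq> car ?P" and T2P: "T2 \<subseteq> car ?P" and S1P: "S1 \<subseteq> car ?P"
    using S2sub T2sub T1sub S1sub BYsub by auto
  have S2ne: "S2 \<noteq> {}" using Z'ne ST2(4) nonempty_iff[OF wf S2P] by (simp add: restr_restr[OF S2sub])
  have Rne: "S1 \<union> T2 \<noteq> {}"
  proof -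
    have "V \<noteq> pom_one \<Longrightarrow> S1 \<noteq> {}"
      using ST1(4) nonempty_iff[OF wf S1P] by (simp add: restr_restr[OF S1sub])
    moreover have "W \<noteq> pom_one \<Longrightarrow> T2 \<noteq> {}"
      using ST2(5) nonempty_iff[OF wf T2P] by (simp add: restr_restr[OF T2sub])
    ultimately show ?thesis using VW by blast
  qed
  have un: "S2 \<union> (S1 \<union> T2) = BY" using ST1(1) ST2(1) by auto
  have dj: "S2 \<inter> (S1 \<union> T2) = {}" using ST1(2) ST2(2) S2sub by auto
  have ed: "(s, r) \<in> edge False ?P BY" if "s \<in> S2" "r \<in> S1 \<union> T2" for s r
  proof -
    have sr: "s \<noteq> r" "s \<in> BY" "r \<in> BY" using that dj un by auto
    have "(r, s) \<in> rel ?P \<or> (s, r) \<in> rel ?P"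
    proof (cases "r \<in> S1")
      case True
      then have "(r, s) \<in> rel ?P" using ST1(3) S2sub that(1) unfolding cross_def by auto
      then show ?thesis by simp
    next
      case False
      then have "r \<in> T2" using that(2) by simp
      then have "(s, r) \<in> rel ?P" using ST2(3) that(1) unfolding cross_def by auto
      then show ?thesis by simp
    qed
    then show ?thesis using sr unfolding edge_def by auto
  qed
  have cc: "BY = bcomp False ?P x"
  proof (rule comp_of_connected[OF Bs(2) _ x])
    show "BY \<in> set Bs" unfolding B2 by simp
    fix z assume "z \<in> BY"
    then show "(x, z) \<in> (edge False ?P BY)\<^sup>*" using all_conn[OF un dj S2ne Rne ed] x by blast
  qed
  have hC: "has_depth (pom_of (restr ?P BY)) d1" using hY XY(2) by simp
  show ?thesis by (rule LB[OF hZ BYsub BYneq x cc hC])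
qed



theorem mainTheorem9:
  fixes delta :: "'q \<Rightarrow> 'a::finite \<Rightarrow> 'q" and gamma :: "'q \<Rightarrow> 'q \<Rightarrow> 'q \<Rightarrow> 'q"
    and F :: "'q set" and qbot qtop :: 'q
    and q0 q1 q2 q3 q4 q5 :: 'q and U V W X :: "'a pomset"
  assumes PA: "is_PA delta gamma F qbot qtop"
    and fs: "finitely_supported delta gamma qbot"
    and F_states: "q1 \<in> F" "q3 \<in> F" "q5 \<in> F"
    and sp: "U \<in> sp_pomsets" "V \<in> sp_pomsets" "W \<in> sp_pomsets" "X \<in> sp_pomsets"
    and tU: "trace delta gamma F q0 U q1"
    and tV: "trace delta gamma F q0 V q0"
    and tX: "trace delta gamma F q2 X q3"
    and tW: "trace delta gamma F q4 W q5"
    and fork: "gamma q0 q2 q0 = q4"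
    and X1: "X \<noteq> pom_one"
    and WV: "W \<noteq> pom_one \<or> V \<noteq> pom_one"
  shows "\<forall>n::nat. \<exists>Y \<in> lang delta gamma F q0. depth Y > n"
proof -
  define Y :: "nat \<Rightarrow> 'a pomset" where "Y = rec_nat U (\<lambda>_ Yk. pom_seq V (pom_seq (pom_par X Yk) W))"
  have Y0: "Y 0 = U" unfolding Y_def by simp
  have YS: "Y (Suc k) = pom_seq V (pom_seq (pom_par X (Y k)) W)" for k unfolding Y_def by simp
  have VW: "V \<noteq> pom_one \<or> W \<noteq> pom_one" using WV by blast
  have spY: "Y k \<in> sp_pomsets" for k
  proof (induction k)
    case 0 then show ?case using Y0 sp(1) by simp
  next
    case (Suc k) then show ?case unfolding YS by (intro sp_seq sp_par sp)
  qed
  have trY: "\<exists>q\<in>F. trace delta gamma F q0 (Y k) q" for k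
  proof (induction k)
    case 0 then show ?case using Y0 tU F_states by auto
  next
    case (Suc k)
    then obtain q where q: "q \<in> F" "trace delta gamma F q0 (Y k) q" by blast
    have "trace delta gamma F q0 (pom_par X (Y k)) (gamma q0 q2 q0)"
      by (rule tr_par[OF tX F_states(2) q(2) q(1)])
    then have "trace delta gamma F q0 (pom_par X (Y k)) q4" using fork by simp
    then have "trace delta gamma F q0 (pom_seq (pom_par X (Y k)) W) q5" using tW by (rule tr_seq)
    then have "trace delta gamma F q0 (Y (Suc k)) q5" unfolding YS by (rule tr_seq[OF tV])
    then show ?case using F_states(3) by blast
  qed
  have Zne: "pom_par X A \<noteq> pom_one" for A using par_ne X1 by blast
  have neY: "Y (Suc k) \<noteq> pom_one" for k
    unfolding YS using seq_ne[of "pom_par X (Y k)" W] seq_ne[of V] Zne by blast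
  have incr: "depth (Y (Suc k)) < depth (Y (Suc (Suc k)))" for k
  proof -
    let ?Z = "pom_par X (Y (Suc k))"
    have spZ: "?Z \<in> sp_pomsets" using sp_par[OF sp(4) spY] .
    have h1: "has_depth (Y (Suc k)) (depth (Y (Suc k)))" by (rule sp_depth[OF spY])
    have h2: "has_depth ?Z (depth ?Z)" by (rule sp_depth[OF spZ])
    have h3: "has_depth (Y (Suc (Suc k))) (depth (Y (Suc (Suc k))))" by (rule sp_depth[OF spY])
    have "depth (Y (Suc k)) < depth ?Z"
      by (rule step_lb_B[OF X1 YS Zne VW h2 h1])
    moreover have "depth ?Z < depth (Y (Suc (Suc k)))"
      by (rule step_lb_A[OF Zne VW refl X1 neY]) (use h3 h2 YS in simp_all)
    ultimately show ?thesis by simp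
  qed
  have grow: "k \<le> depth (Y (Suc k))" for k
  proof (induction k)
    case 0 then show ?case by simp
  next
    case (Suc k) then show ?case using incr[of k] by simp
  qed
  show ?thesis
  proof
    fix n :: nat
    have "n < depth (Y (Suc (Suc n)))" using grow[of "Suc n"] by simp
    moreover have "Y (Suc (Suc n)) \<in> lang delta gamma F q0" unfolding lang_def using trY by blast
    ultimately show "\<exists>Y \<in> lang delta gamma F q0. depth Y > n" by blast
  qed
qed


end
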